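(* Let $\mathbb{X}$ be a finite quantum set, let $n\in\mathbb{N}$ and let $\mathcal{G}_i=(\mathbb{X},A_i)$, $i=1,\dots,n$, be directed regular quantum graphs without loops on $\mathbb{X}$. Then there exists a directed quantum graph $\mathcal{G}=(\mathbb{X}',A')$ such that $\operatorname{Qut}(\mathcal{G})=\bigcap_{i=1}^n\operatorname{Qut}(\mathcal{G}_i)$.
   Context: A finite quantum set $\mathbb{X}$ is a finite-dimensional C*-algebra $C(\mathbb{X})$ with its unique tracial positive functional $\psi$ such that, for $\langle x,y\rangle=\psi(x^*y)$ on $\ell^2(\mathbb{X}):=C(\mathbb{X})$, the multiplication $m$ satisfies $mm^*=\mathrm{id}$; $\eta$ denotes the unit of $C(\mathbb{X})$. For linear maps on $\ell^2(\mathbb{X})$: $A\bullet B=m(A\otimes B)m^*$, $\bar Af=(A(f^* ))^*$. A directed quantum graph is $(\mathbb{X},A)$ with $A\bullet A=A=\bar A$; it has no loops if $A\bullet I=0$; it is $d$-regular if $A\eta=A^*\eta=d\eta$, and regular if $d$-regular for some $d$. $\operatorname{Qut}(\mathbb{X},A)$ is the compact matrix quantum group whose Hopf $*$-algebra is the universal $*$-algebra generated by the entries $u_{ij}$ of a matrix $U$ (in an orthonormal basis of $\ell^2(\mathbb{X})$) subject to $U$ unitary, $m(U\otimes U)=Um$, $U\eta=\eta$, $UA=AU$. For compact matrix quantum groups with fundamental representations of the same size (here all on $\ell^2(\mathbb{X})$), the intersection is given by the universal $*$-algebra generated by $u_{ij}$ subject to the relations of all of them. Equality of quantum automorphism groups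 is understood as isomorphism of compact quantum groups. *)

theory Defs
  imports Complex_Main
begin

section \<open>Noncommutative polynomials (free algebra) and generated *-ideals\<close>

text \<open>A noncommutative polynomial over a letter type 'l is a finitely supported
  function from words (lists of letters) to complex coefficients.\<close>

type_synonym 'l ncp = "'l list \<Rightarrow> complex"

definition ncpoly :: "'l set \<Rightarrow> 'l ncp set" where
  "ncpoly L = {p. finite {w. p w \<noteq> 0} \<and> (\<forall>w. p w \<noteq> 0 \<longrightarrow> set w \<subseteq> L)}"

definition pzero :: "'l ncp" where "pzero = (\<lambda>w. 0)"
definition pconst :: "complex \<Rightarrow> 'l ncp" where "pconst c = (\<lambda>w. if w = [] then c else 0)"
definition mono :: "'l list \<Rightarrow> 'l ncp" where "mono v = (\<lambda>w. if w = v then 1 else 0)"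
definition padd :: "'l ncp \<Rightarrow> 'l ncp \<Rightarrow> 'l ncp" where "padd p q = (\<lambda>w. p w + q w)"
definition pdiff :: "'l ncp \<Rightarrow> 'l ncp \<Rightarrow> 'l ncp" where "pdiff p q = (\<lambda>w. p w - q w)"
definition psmult :: "complex \<Rightarrow> 'l ncp \<Rightarrow> 'l ncp" where "psmult c p = (\<lambda>w. c * p w)"
definition psum :: "('a \<Rightarrow> 'l ncp) \<Rightarrow> 'a set \<Rightarrow> 'l ncp" where
  "psum f S = (\<lambda>w. \<Sum>x\<in>S. f x w)"

definition pmul :: "'l ncp \<Rightarrow> 'l ncp \<Rightarrow> 'l ncp" where
  "pmul p q = (\<lambda>w. \<Sum>k\<le>length w. p (take k w) * q (drop k w))"

text \<open>Involution: fl maps a letter to its starred letter (an involution on letters).\<close>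
definition pstar :: "('l \<Rightarrow> 'l) \<Rightarrow> 'l ncp \<Rightarrow> 'l ncp" where
  "pstar fl p = (\<lambda>w. cnj (p (map fl (rev w))))"

definition wimg :: "('l \<Rightarrow> 'm ncp) \<Rightarrow> 'l list \<Rightarrow> 'm ncp" where
  "wimg g w = foldr (\<lambda>x acc. pmul (g x) acc) w (pconst 1)"

definition subst :: "('l \<Rightarrow> 'm ncp) \<Rightarrow> 'l ncp \<Rightarrow> 'm ncp" where
  "subst g p = (\<lambda>v. \<Sum>w\<in>{w. p w \<noteq> 0}. p w * wimg g w v)"

inductive_set gideal :: "'l set \<Rightarrow> 'l ncp set \<Rightarrow> 'l ncp set" for L R where
  zero: "pzero \<in> gideal L R"
| gen: "r \<in> R \<Longrightarrow> set w1 \<subseteq> L \<Longrightarrow> set w2 \<subseteq> L \<Longrightarrow> pmul (mono w1) (pmul r (mono w2)) \<in> gideal L R"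
| add: "a \<in> gideal L R \<Longrightarrow> b \<in> gideal L R \<Longrightarrow> padd a b \<in> gideal L R"
| smult: "a \<in> gideal L R \<Longrightarrow> psmult c a \<in> gideal L R"

text \<open>*-ideal generated by R (the universal *-algebra is the free *-algebra modulo it).\<close>
definition starideal :: "('l \<Rightarrow> 'l) \<Rightarrow> 'l set \<Rightarrow> 'l ncp set \<Rightarrow> 'l ncp set" where
  "starideal fl L R = gideal L (R \<union> pstar fl ` R)"

section \<open>Finite quantum sets in coordinates\<close>

text \<open>A finite quantum set is given by its block sizes: C(X) = M_{n_1} (+) ... (+) M_{n_k},
  whose unique tracial functional with m m^* = id is psi = (+)_b n_b Tr.
  Orthonormal basis of l^2(X): e_(b,r,s) = n_b^(-1/2) E_rs in block b.\<close>

type_synonym idx = "nat \<times> nat \<times> nat"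

definition qset :: "nat list \<Rightarrow> bool" where
  "qset ns \<longleftrightarrow> ns \<noteq> [] \<and> (\<forall>b<length ns. 0 < ns ! b)"

definition qbasis :: "nat list \<Rightarrow> idx set" where
  "qbasis ns = {(b, r, s). b < length ns \<and> r < ns ! b \<and> s < ns ! b}"

text \<open>Structure constants of m: coefficient of e_c in e_k e_l.\<close>
definition mc :: "nat list \<Rightarrow> idx \<Rightarrow> idx \<Rightarrow> idx \<Rightarrow> complex" where
  "mc ns c k l = (case c of (b, r, s) \<Rightarrow> case k of (b1, r1, s1) \<Rightarrow> case l of (b2, r2, s2) \<Rightarrow>
     if b1 = b \<and> b2 = b \<and> r1 = r \<and> s1 = r2 \<and> s2 = s then complex_of_real (1 / sqrt (real (ns ! b))) else 0)"

text \<open>The unit eta of C(X) in the orthonormal basis.\<close>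
definition eta :: "nat list \<Rightarrow> idx \<Rightarrow> complex" where
  "eta ns c = (case c of (b, r, s) \<Rightarrow> if r = s then complex_of_real (sqrt (real (ns ! b))) else 0)"

text \<open>Transpose of basis index: e_(b,r,s)^* = e_(b,s,r).\<close>
definition itr :: "idx \<Rightarrow> idx" where "itr c = (case c of (b, r, s) \<Rightarrow> (b, s, r))"

text \<open>Linear maps on l^2(X) are given by matrices in the basis (A c d = <e_c, A e_d>).\<close>
type_synonym lmap = "idx \<Rightarrow> idx \<Rightarrow> complex"

definition idm :: lmap where "idm c d = (if c = d then 1 else 0)"

text \<open>A \<bullet> B = m (A \<otimes> B) m^*.\<close>
definition schur :: "nat list \<Rightarrow> lmap \<Rightarrow> lmap \<Rightarrow> lmap" where
  "schur ns A B c d = (\<Sum>k\<in>qbasis ns. \<Sum>l\<in>qbasis ns. \<Sum>k'\<in>qbasis ns. \<Sum>l'\<in>qbasis ns.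
      mc ns c k l * A k k' * B l l' * cnj (mc ns d k' l'))"

text \<open>bar A f = (A (f^*))^*.\<close>
definition barm :: "lmap \<Rightarrow> lmap" where
  "barm A c d = cnj (A (itr c) (itr d))"

definition qgraph :: "nat list \<Rightarrow> lmap \<Rightarrow> bool" where
  "qgraph ns A \<longleftrightarrow> (\<forall>c\<in>qbasis ns. \<forall>d\<in>qbasis ns.
      schur ns A A c d = A c d \<and> barm A c d = A c d)"

definition noloops :: "nat list \<Rightarrow> lmap \<Rightarrow> bool" where
  "noloops ns A \<longleftrightarrow> (\<forall>c\<in>qbasis ns. \<forall>d\<in>qbasis ns. schur ns A idm c d = 0)"

definition dregular :: "nat list \<Rightarrow> lmap \<Rightarrow> real \<Rightarrow> bool" where
  "dregular ns A d \<longleftrightarrow> (\<forall>c\<in>qbasis ns.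
      (\<Sum>e\<in>qbasis ns. A c e * eta ns e) = complex_of_real d * eta ns c \<and>
      (\<Sum>e\<in>qbasis ns. cnj (A e c) * eta ns e) = complex_of_real d * eta ns c)"

definition regular :: "nat list \<Rightarrow> lmap \<Rightarrow> bool" where
  "regular ns A \<longleftrightarrow> (\<exists>d. dregular ns A d)"

section \<open>Quantum automorphism groups as universal Hopf *-algebras\<close>

text \<open>Letters: (i, j, False) is u_ij, (i, j, True) is u_ij^*.\<close>
type_synonym letter = "idx \<times> idx \<times> bool"

definition flipL :: "letter \<Rightarrow> letter" where "flipL x = (case x of (i, j, b) \<Rightarrow> (i, j, \<not> b))"

definition lett :: "idx set \<Rightarrow> letter set" where
  "lett B = {(i, j, b). i \<in> B \<and> j \<in> B}"

definition ug :: "idx \<Rightarrow> idx \<Rightarrow> letter ncp" where "ug i j = mono [(i, j, False)]"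
definition ugs :: "idx \<Rightarrow> idx \<Rightarrow> letter ncp" where "ugs i j = mono [(i, j, True)]"

definition delta :: "'a \<Rightarrow> 'a \<Rightarrow> complex" where "delta i j = (if i = j then 1 else 0)"

text \<open>Relations: U unitary, m(U \<otimes> U) = U m, U eta = eta.\<close>
definition rel_qset :: "nat list \<Rightarrow> letter ncp set" where
  "rel_qset ns =
     {pdiff (psum (\<lambda>k. pmul (ug i k) (ugs j k)) (qbasis ns)) (pconst (delta i j)) | i j.
        i \<in> qbasis ns \<and> j \<in> qbasis ns}
   \<union> {pdiff (psum (\<lambda>k. pmul (ugs k i) (ug k j)) (qbasis ns)) (pconst (delta i j)) | i j.
        i \<in> qbasis ns \<and> j \<in> qbasis ns}
   \<union> {pdiff (psum (\<lambda>a. psum (\<lambda>b. psmult (mc ns c a b) (pmul (ug a k) (ug b l))) (qbasis ns)) (qbasis ns))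
            (psum (\<lambda>d. psmult (mc ns d k l) (ug c d)) (qbasis ns)) | c k l.
        c \<in> qbasis ns \<and> k \<in> qbasis ns \<and> l \<in> qbasis ns}
   \<union> {pdiff (psum (\<lambda>j. psmult (eta ns j) (ug i j)) (qbasis ns)) (pconst (eta ns i)) | i.
        i \<in> qbasis ns}"

text \<open>Relation UA = AU.\<close>
definition rel_graph :: "nat list \<Rightarrow> lmap \<Rightarrow> letter ncp set" where
  "rel_graph ns A =
     {pdiff (psum (\<lambda>k. psmult (A k j) (ug i k)) (qbasis ns)) (psum (\<lambda>k. psmult (A i k) (ug k j)) (qbasis ns)) | i j.
        i \<in> qbasis ns \<and> j \<in> qbasis ns}"

text \<open>Relations of the intersection of Qut(X, A) for A in a set As (the relations of all of them).\<close>
definition qut_rel :: "nat list \<Rightarrow> lmap set \<Rightarrow> letter ncp set" where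
  "qut_rel ns As = rel_qset ns \<union> (\<Union>A\<in>As. rel_graph ns A)"

text \<open>Algebraic tensor product A \<otimes> A: free *-algebra on two copies of the letters, modulo the
  relations on each copy and commutation of letters from different copies.\<close>
definition cp :: "bool \<Rightarrow> 'l ncp \<Rightarrow> ('l \<times> bool) ncp" where
  "cp c p = (\<lambda>w. if (\<forall>x\<in>set w. snd x = c) then p (map fst w) else 0)"

definition flipT :: "letter \<times> bool \<Rightarrow> letter \<times> bool" where
  "flipT x = (flipL (fst x), snd x)"

definition tideal :: "idx set \<Rightarrow> letter ncp set \<Rightarrow> (letter \<times> bool) ncp set" where
  "tideal B R = starideal flipT (lett B \<times> UNIV)
     (cp False ` R \<union> cp True ` R \<union>
      {pdiff (pmul (mono [(x, False)]) (mono [(y, True)])) (pmul (mono [(y, True)]) (mono [(x, False)])) | x y.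
         x \<in> lett B \<and> y \<in> lett B})"

definition comult :: "idx set \<Rightarrow> idx \<Rightarrow> idx \<Rightarrow> (letter \<times> bool) ncp" where
  "comult B i j = psum (\<lambda>k. pmul (cp False (ug i k)) (cp True (ug k j))) B"

definition dimg :: "idx set \<Rightarrow> letter \<Rightarrow> (letter \<times> bool) ncp" where
  "dimg B x = (case x of (i, j, b) \<Rightarrow> if b then pstar flipT (comult B i j) else comult B i j)"

definition simg :: "(idx \<times> idx \<Rightarrow> letter ncp) \<Rightarrow> letter \<Rightarrow> letter ncp" where
  "simg q x = (case x of (i, j, b) \<Rightarrow> if b then pstar flipL (q (i, j)) else q (i, j))"

definition timg :: "(idx \<times> idx \<Rightarrow> letter ncp) \<Rightarrow> letter \<times> bool \<Rightarrow> (letter \<times> bool) ncp" where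
  "timg q x = cp (snd x) (simg q (fst x))"

text \<open>Isomorphism of the compact quantum groups with Hopf *-algebras
  Pol = free *-algebra on u_ij (i,j in B) modulo the *-ideal generated by R, resp. on B' and S:
  a *-algebra isomorphism (given by generator images q and inverse q') intertwining the
  comultiplications.\<close>
definition qgiso :: "idx set \<Rightarrow> letter ncp set \<Rightarrow> idx set \<Rightarrow> letter ncp set \<Rightarrow> bool" where
  "qgiso B R B' S \<longleftrightarrow> (\<exists>q q'.
     (\<forall>i\<in>B. \<forall>j\<in>B. q (i, j) \<in> ncpoly (lett B')) \<and>
     (\<forall>i\<in>B'. \<forall>j\<in>B'. q' (i, j) \<in> ncpoly (lett B)) \<and>
     (\<forall>r\<in>R. subst (simg q) r \<in> starideal flipL (lett B') S) \<and>
     (\<forall>s\<in>S. subst (simg q') s \<in> starideal flipL (lett B) R) \<and>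
     (\<forall>i\<in>B. \<forall>j\<in>B. pdiff (subst (simg q') (q (i, j))) (ug i j) \<in> starideal flipL (lett B) R) \<and>
     (\<forall>i\<in>B'. \<forall>j\<in>B'. pdiff (subst (simg q) (q' (i, j))) (ug i j) \<in> starideal flipL (lett B') S) \<and>
     (\<forall>i\<in>B. \<forall>j\<in>B. pdiff (subst (timg q) (comult B i j)) (subst (dimg B') (q (i, j)))
                       \<in> tideal B' S))"

end

theory Submission
  imports Defs
begin


lemma pmul_mono_left:
  "pmul (mono v) p w = (if (\<exists>u. w = v @ u) then p (drop (length v) w) else 0)"
proof -
  have "pmul (mono v) p w = (\<Sum>k\<le>length w. (if k = length v then (if take k w = v then p (drop k w) else 0) else 0))"
    unfolding pmul_def mono_def by (intro sum.cong refl) auto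
  also have "\<dots> = (if length v \<le> length w \<and> take (length v) w = v then p (drop (length v) w) else 0)"
    by (subst sum.delta) auto
  also have "\<dots> = (if (\<exists>u. w = v @ u) then p (drop (length v) w) else 0)"
    by (metis append_eq_conv_conj append_take_drop_id length_take min.absorb_iff2 nat_le_linear take_all)
  finally show ?thesis .
qed

lemma suffix_cond: "(length v \<le> length w \<and> drop (length w - length v) w = v) \<longleftrightarrow> (\<exists>u. w = u @ v)"
proof
  assume "length v \<le> length w \<and> drop (length w - length v) w = v"
  then show "\<exists>u. w = u @ v" by (metis append_take_drop_id)
next
  assume "\<exists>u. w = u @ v"
  then obtain u where "w = u @ v" by blast
  then show "length v \<le> length w \<and> drop (length w - length v) w = v" by simp
qed

lemma pmul_mono_right:
  "pmul p (mono v) w = (if (\<exists>u. w = u @ v) then p (take (length w - length v) w) else 0)"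
proof -
  have "pmul p (mono v) w = (\<Sum>k\<le>length w. (if k = length w - length v then (if length v \<le> length w \<and> drop k w = v then p (take k w) else 0) else 0))"
    unfolding pmul_def mono_def by (intro sum.cong refl) auto
  also have "\<dots> = (if length v \<le> length w \<and> drop (length w - length v) w = v then p (take (length w - length v) w) else 0)"
    by (subst sum.delta) auto
  also have "\<dots> = (if (\<exists>u. w = u @ v) then p (take (length w - length v) w) else 0)"
    by (simp only: suffix_cond)
  finally show ?thesis .
qed

lemma mono_mul: "pmul (mono v) (mono w) = mono (v @ w)"
  by (rule ext) (simp add: pmul_mono_left, auto simp: mono_def)

lemma pmul_mono_assoc_left: "pmul (mono v) (pmul (mono w) p) = pmul (mono (v @ w)) p"
  by (rule ext) (auto simp: pmul_mono_left)

lemma pmul_mono_assoc_right: "pmul (pmul p (mono v)) (mono w) = pmul p (mono (v @ w))"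
  by (rule ext) (auto simp: pmul_mono_right)

lemma pmul_mono_assoc_mid: "pmul (pmul (mono v) p) (mono w) = pmul (mono v) (pmul p (mono w))"
proof (rule ext)
  fix x
  show "pmul (pmul (mono v) p) (mono w) x = pmul (mono v) (pmul p (mono w)) x"
  proof (cases "\<exists>y. x = v @ y @ w")
    case True
    then obtain y where x: "x = v @ y @ w" by blast
    show ?thesis by (simp add: pmul_mono_left pmul_mono_right x)
  next
    case False
    have l: "pmul (pmul (mono v) p) (mono w) x = 0"
    proof (cases "\<exists>u. x = u @ w")
      case True
      then obtain u where u: "x = u @ w" by blast
      have "\<not> (\<exists>y. u = v @ y)" using False u by auto
      then show ?thesis by (simp add: pmul_mono_left pmul_mono_right u)
    qed (simp add: pmul_mono_right)
    have r: "pmul (mono v) (pmul p (mono w)) x = 0"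
    proof (cases "\<exists>u. x = v @ u")
      case True
      then obtain u where u: "x = v @ u" by blast
      have "\<not> (\<exists>y. u = y @ w)" using False u by auto
      then show ?thesis by (simp add: pmul_mono_left pmul_mono_right u)
    qed (simp add: pmul_mono_left)
    show ?thesis using l r by simp
  qed
qed

lemma pmul_mono_Nil_left[simp]: "pmul (mono []) p = p"
  by (rule ext) (simp add: pmul_mono_left)
lemma pmul_mono_Nil_right[simp]: "pmul p (mono []) = p"
  by (rule ext) (simp add: pmul_mono_right)


lemma padd_app: "padd p q w = p w + q w" by (simp add: padd_def)
lemma pdiff_app: "pdiff p q w = p w - q w" by (simp add: pdiff_def)
lemma psmult_app: "psmult c p w = c * p w" by (simp add: psmult_def)
lemma psum_app: "psum f S w = (\<Sum>x\<in>S. f x w)" by (simp add: psum_def)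
lemma pzero_app: "pzero w = 0" by (simp add: pzero_def)
lemma pconst_app: "pconst c w = (if w = [] then c else 0)" by (simp add: pconst_def)
lemmas pw = padd_app pdiff_app psmult_app psum_app pzero_app

lemma pmul_padd_left: "pmul (padd p q) r = padd (pmul p r) (pmul q r)"
  by (rule ext) (simp add: pw pmul_def distrib_right sum.distrib)
lemma pmul_padd_right: "pmul r (padd p q) = padd (pmul r p) (pmul r q)"
  by (rule ext) (simp add: pw pmul_def distrib_left sum.distrib)
lemma pmul_psmult_left: "pmul (psmult c p) r = psmult c (pmul p r)"
  by (rule ext) (simp add: pw pmul_def sum_distrib_left mult.assoc)
lemma pmul_psmult_right: "pmul r (psmult c p) = psmult c (pmul r p)"
  by (rule ext) (simp add: pw pmul_def sum_distrib_left mult.left_commute)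
lemma pmul_pdiff_left: "pmul (pdiff p q) r = pdiff (pmul p r) (pmul q r)"
  by (rule ext) (simp add: pw pmul_def left_diff_distrib sum_subtractf)
lemma pmul_pdiff_right: "pmul r (pdiff p q) = pdiff (pmul r p) (pmul r q)"
  by (rule ext) (simp add: pw pmul_def right_diff_distrib sum_subtractf)
lemma pmul_pzero_left[simp]: "pmul pzero r = pzero"
  by (rule ext) (simp add: pw pmul_def)
lemma pmul_pzero_right[simp]: "pmul r pzero = pzero"
  by (rule ext) (simp add: pw pmul_def)
lemma pmul_psum_left: "pmul (psum f S) r = psum (\<lambda>x. pmul (f x) r) S"
  by (rule ext) (simp add: pw pmul_def sum_distrib_right, rule sum.swap)
lemma pmul_psum_right: "pmul r (psum f S) = psum (\<lambda>x. pmul r (f x)) S"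
  by (rule ext) (simp add: pw pmul_def sum_distrib_left, rule sum.swap)
lemma pconst_mono: "pconst c = psmult c (mono [])"
  by (rule ext) (simp add: pconst_def mono_def pw)
lemma pmul_pconst_left: "pmul (pconst c) r = psmult c r"
  by (simp add: pconst_mono pmul_psmult_left)
lemma pmul_pconst_right: "pmul r (pconst c) = psmult c r"
  by (simp add: pconst_mono pmul_psmult_right)

definition supp :: "'l ncp \<Rightarrow> 'l list set" where "supp p = {w. p w \<noteq> 0}"

lemma ncpoly_iff: "p \<in> ncpoly L \<longleftrightarrow> finite (supp p) \<and> (\<forall>w\<in>supp p. set w \<subseteq> L)"
  by (auto simp: ncpoly_def supp_def)

lemma ncpoly_decomp: "finite (supp p) \<Longrightarrow> p = psum (\<lambda>w. psmult (p w) (mono w)) (supp p)"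
proof (rule ext)
  fix x assume f: "finite (supp p)"
  have "psum (\<lambda>w. psmult (p w) (mono w)) (supp p) x = (\<Sum>w\<in>supp p. (if x = w then p w else 0))"
    by (simp add: pw mono_def) (rule sum.cong, auto)
  also have "\<dots> = p x" using f by (simp add: supp_def)
  finally show "p x = psum (\<lambda>w. psmult (p w) (mono w)) (supp p) x" by simp
qed

lemma ncpoly_mono: "set w \<subseteq> L \<Longrightarrow> mono w \<in> ncpoly L"
  by (auto simp: ncpoly_iff supp_def mono_def)
lemma ncpoly_pzero: "pzero \<in> ncpoly L"
  by (auto simp: ncpoly_iff supp_def pw)
lemma ncpoly_pconst: "pconst c \<in> ncpoly L"
proof -
  have "supp (pconst c) \<subseteq> {[]}" by (auto simp: supp_def pconst_def)
  then show ?thesis by (auto simp: ncpoly_iff intro: finite_subset)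
qed
lemma ncpoly_padd: "p \<in> ncpoly L \<Longrightarrow> q \<in> ncpoly L \<Longrightarrow> padd p q \<in> ncpoly L"
proof -
  assume a: "p \<in> ncpoly L" "q \<in> ncpoly L"
  have "supp (padd p q) \<subseteq> supp p \<union> supp q" by (auto simp: supp_def pw)
  with a show ?thesis unfolding ncpoly_iff by (meson finite_UnI finite_subset Un_iff subsetD)
qed
lemma ncpoly_psmult: "p \<in> ncpoly L \<Longrightarrow> psmult c p \<in> ncpoly L"
proof -
  assume a: "p \<in> ncpoly L"
  have "supp (psmult c p) \<subseteq> supp p" by (auto simp: supp_def pw)
  with a show ?thesis unfolding ncpoly_iff by (meson finite_subset subsetD)
qed
lemma ncpoly_pdiff: "p \<in> ncpoly L \<Longrightarrow> q \<in> ncpoly L \<Longrightarrow> pdiff p q \<in> ncpoly L"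
proof -
  assume a: "p \<in> ncpoly L" "q \<in> ncpoly L"
  have "pdiff p q = padd p (psmult (-1) q)" by (rule ext) (simp add: pw)
  then show ?thesis using a by (simp add: ncpoly_padd ncpoly_psmult)
qed
lemma ncpoly_psum: "finite S \<Longrightarrow> (\<And>x. x \<in> S \<Longrightarrow> f x \<in> ncpoly L) \<Longrightarrow> psum f S \<in> ncpoly L"
proof (induction S rule: finite_induct)
  case empty
  have "psum f {} = pzero" by (rule ext) (simp add: pw)
  then show ?case by (simp add: ncpoly_pzero)
next
  case (insert x F)
  have "psum f (insert x F) = padd (f x) (psum f F)" using insert by (intro ext) (simp add: pw)
  then show ?case using insert by (simp add: ncpoly_padd)
qed

lemma gideal_gen1: "r \<in> R \<Longrightarrow> r \<in> gideal L R"
  using gideal.gen[of r R "[]" L "[]"] by simp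

lemma gideal_neg: "a \<in> gideal L R \<Longrightarrow> psmult (-1) a \<in> gideal L R"
  by (rule gideal.smult)

lemma gideal_pdiff: "a \<in> gideal L R \<Longrightarrow> b \<in> gideal L R \<Longrightarrow> pdiff a b \<in> gideal L R"
proof -
  assume a: "a \<in> gideal L R" "b \<in> gideal L R"
  have "pdiff a b = padd a (psmult (-1) b)" by (rule ext) (simp add: pw)
  then show ?thesis using a by (simp add: gideal.add gideal.smult)
qed

lemma gideal_psum: "finite S \<Longrightarrow> (\<And>x. x \<in> S \<Longrightarrow> f x \<in> gideal L R) \<Longrightarrow> psum f S \<in> gideal L R"
proof (induction S rule: finite_induct)
  case empty
  have "psum f {} = pzero" by (rule ext) (simp add: pw)
  then show ?case by (simp add: gideal.zero)
next
  case (insert x F)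
  have "psum f (insert x F) = padd (f x) (psum f F)" using insert by (intro ext) (simp add: pw)
  then show ?case using insert by (simp add: gideal.add)
qed

lemma gideal_eq: "a \<in> gideal L R \<Longrightarrow> a = b \<Longrightarrow> b \<in> gideal L R" by simp

lemma gideal_mono_left: "a \<in> gideal L R \<Longrightarrow> set v \<subseteq> L \<Longrightarrow> pmul (mono v) a \<in> gideal L R"
proof (induction a rule: gideal.induct)
  case zero then show ?case by (simp add: gideal.zero)
next
  case (gen r w1 w2)
  then show ?case using gideal.gen[of r R "v @ w1" L w2] by (simp add: pmul_mono_assoc_left)
next
  case (add a b) then show ?case by (simp add: pmul_padd_right gideal.add)
next
  case (smult a c) then show ?case by (simp add: pmul_psmult_right gideal.smult)
qed

lemma gideal_mono_right: "a \<in> gideal L R \<Longrightarrow> set v \<subseteq> L \<Longrightarrow> pmul a (mono v) \<in> gideal L R"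
proof (induction a rule: gideal.induct)
  case zero then show ?case by (simp add: gideal.zero)
next
  case (gen r w1 w2)
  then show ?case using gideal.gen[of r R w1 L "w2 @ v"]
    by (simp add: pmul_mono_assoc_mid pmul_mono_assoc_right)
next
  case (add a b) then show ?case by (simp add: pmul_padd_left gideal.add)
next
  case (smult a c) then show ?case by (simp add: pmul_psmult_left gideal.smult)
qed

lemma gideal_mul_left: "a \<in> gideal L R \<Longrightarrow> p \<in> ncpoly L \<Longrightarrow> pmul p a \<in> gideal L R"
proof -
  assume a: "a \<in> gideal L R" and p: "p \<in> ncpoly L"
  then have f: "finite (supp p)" and s: "\<forall>w\<in>supp p. set w \<subseteq> L" by (auto simp: ncpoly_iff)
  have "pmul p a = psum (\<lambda>w. psmult (p w) (pmul (mono w) a)) (supp p)"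
    by (subst ncpoly_decomp[OF f]) (simp add: pmul_psum_left pmul_psmult_left)
  also have "\<dots> \<in> gideal L R"
    using f s a by (intro gideal_psum gideal.smult gideal_mono_left) auto
  finally show ?thesis .
qed

lemma gideal_mul_right: "a \<in> gideal L R \<Longrightarrow> p \<in> ncpoly L \<Longrightarrow> pmul a p \<in> gideal L R"
proof -
  assume a: "a \<in> gideal L R" and p: "p \<in> ncpoly L"
  then have f: "finite (supp p)" and s: "\<forall>w\<in>supp p. set w \<subseteq> L" by (auto simp: ncpoly_iff)
  have "pmul a p = psum (\<lambda>w. psmult (p w) (pmul a (mono w))) (supp p)"
    by (subst ncpoly_decomp[OF f]) (simp add: pmul_psum_right pmul_psmult_right)
  also have "\<dots> \<in> gideal L R"
    using f s a by (intro gideal_psum gideal.smult gideal_mono_right) auto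
  finally show ?thesis .
qed

definition eqv :: "'l ncp set \<Rightarrow> 'l ncp \<Rightarrow> 'l ncp \<Rightarrow> bool" where
  "eqv I p q \<longleftrightarrow> pdiff p q \<in> I"

lemma eqv_refl: "eqv (gideal L R) p p"
proof -
  have "pdiff p p = pzero" by (rule ext) (simp add: pw)
  then show ?thesis by (simp add: eqv_def gideal.zero)
qed

lemma eqv_sym: "eqv (gideal L R) p q \<Longrightarrow> eqv (gideal L R) q p"
proof -
  assume "eqv (gideal L R) p q"
  then have "psmult (-1) (pdiff p q) \<in> gideal L R" unfolding eqv_def by (rule gideal.smult)
  moreover have "psmult (-1) (pdiff p q) = pdiff q p" by (rule ext) (simp add: pw)
  ultimately show ?thesis unfolding eqv_def by simp
qed

lemma eqv_trans: "eqv (gideal L R) p q \<Longrightarrow> eqv (gideal L R) q r \<Longrightarrow> eqv (gideal L R) p r"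
proof -
  assume "eqv (gideal L R) p q" "eqv (gideal L R) q r"
  then have "padd (pdiff p q) (pdiff q r) \<in> gideal L R" unfolding eqv_def by (rule gideal.add)
  moreover have "padd (pdiff p q) (pdiff q r) = pdiff p r" by (rule ext) (simp add: pw)
  ultimately show ?thesis unfolding eqv_def by simp
qed

lemma eqv_eq_trans: "eqv I p q \<Longrightarrow> q = r \<Longrightarrow> eqv I p r" by simp
lemma eq_eqv_trans: "p = q \<Longrightarrow> eqv I q r \<Longrightarrow> eqv I p r" by simp

lemma eqv_padd: "eqv (gideal L R) p q \<Longrightarrow> eqv (gideal L R) p' q' \<Longrightarrow> eqv (gideal L R) (padd p p') (padd q q')"
proof -
  assume "eqv (gideal L R) p q" "eqv (gideal L R) p' q'"
  then have "padd (pdiff p q) (pdiff p' q') \<in> gideal L R" unfolding eqv_def by (rule gideal.add)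
  moreover have "padd (pdiff p q) (pdiff p' q') = pdiff (padd p p') (padd q q')" by (rule ext) (simp add: pw)
  ultimately show ?thesis unfolding eqv_def by simp
qed

lemma eqv_pdiff: "eqv (gideal L R) p q \<Longrightarrow> eqv (gideal L R) p' q' \<Longrightarrow> eqv (gideal L R) (pdiff p p') (pdiff q q')"
proof -
  assume "eqv (gideal L R) p q" "eqv (gideal L R) p' q'"
  then have "pdiff (pdiff p q) (pdiff p' q') \<in> gideal L R" unfolding eqv_def by (rule gideal_pdiff)
  moreover have "pdiff (pdiff p q) (pdiff p' q') = pdiff (pdiff p p') (pdiff q q')" by (rule ext) (simp add: pw)
  ultimately show ?thesis unfolding eqv_def by simp
qed

lemma eqv_psmult: "eqv (gideal L R) p q \<Longrightarrow> eqv (gideal L R) (psmult c p) (psmult c q)"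
proof -
  assume "eqv (gideal L R) p q"
  then have "psmult c (pdiff p q) \<in> gideal L R" unfolding eqv_def by (rule gideal.smult)
  moreover have "psmult c (pdiff p q) = pdiff (psmult c p) (psmult c q)" by (rule ext) (simp add: pw algebra_simps)
  ultimately show ?thesis unfolding eqv_def by simp
qed

lemma eqv_psum: "finite S \<Longrightarrow> (\<And>x. x \<in> S \<Longrightarrow> eqv (gideal L R) (f x) (g x)) \<Longrightarrow>
   eqv (gideal L R) (psum f S) (psum g S)"
proof -
  assume "finite S" "\<And>x. x \<in> S \<Longrightarrow> eqv (gideal L R) (f x) (g x)"
  then have "psum (\<lambda>x. pdiff (f x) (g x)) S \<in> gideal L R" unfolding eqv_def by (rule gideal_psum)
  moreover have "psum (\<lambda>x. pdiff (f x) (g x)) S = pdiff (psum f S) (psum g S)" by (rule ext) (simp add: pw sum_subtractf)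
  ultimately show ?thesis unfolding eqv_def by simp
qed

lemma eqv_mul_right: "eqv (gideal L R) p q \<Longrightarrow> r \<in> ncpoly L \<Longrightarrow> eqv (gideal L R) (pmul p r) (pmul q r)"
  unfolding eqv_def by (simp add: gideal_mul_right pmul_pdiff_left[symmetric])

lemma eqv_mul_left: "eqv (gideal L R) p q \<Longrightarrow> r \<in> ncpoly L \<Longrightarrow> eqv (gideal L R) (pmul r p) (pmul r q)"
  unfolding eqv_def by (simp add: gideal_mul_left pmul_pdiff_right[symmetric])

lemma eqv_zero_iff: "eqv I p pzero \<longleftrightarrow> p \<in> I"
proof -
  have "pdiff p pzero = p" by (rule ext) (simp add: pw)
  then show ?thesis by (simp add: eqv_def)
qed


lemma subst_superset: "finite S \<Longrightarrow> supp p \<subseteq> S \<Longrightarrow> subst g p = psum (\<lambda>w. psmult (p w) (wimg g w)) S"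
proof (rule ext)
  fix v assume S: "finite S" "supp p \<subseteq> S"
  have "subst g p v = (\<Sum>w\<in>supp p. p w * wimg g w v)" by (simp add: subst_def supp_def)
  also have "\<dots> = (\<Sum>w\<in>S. p w * wimg g w v)"
    using S by (intro sum.mono_neutral_left) (auto simp: supp_def)
  finally show "subst g p v = psum (\<lambda>w. psmult (p w) (wimg g w)) S v" by (simp add: pw)
qed

lemma subst_padd: "finite (supp p) \<Longrightarrow> finite (supp q) \<Longrightarrow> subst g (padd p q) = padd (subst g p) (subst g q)"
proof -
  assume f: "finite (supp p)" "finite (supp q)"
  let ?S = "supp p \<union> supp q"
  have s: "supp (padd p q) \<subseteq> ?S" by (auto simp: supp_def pw)
  show ?thesis
    using f s by (subst (1 2 3) subst_superset[where S = ?S]) (auto intro!: ext simp: pw distrib_right sum.distrib)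
qed

lemma subst_pdiff: "finite (supp p) \<Longrightarrow> finite (supp q) \<Longrightarrow> subst g (pdiff p q) = pdiff (subst g p) (subst g q)"
proof -
  assume f: "finite (supp p)" "finite (supp q)"
  let ?S = "supp p \<union> supp q"
  have s: "supp (pdiff p q) \<subseteq> ?S" by (auto simp: supp_def pw)
  show ?thesis
    using f s by (subst (1 2 3) subst_superset[where S = ?S]) (auto intro!: ext simp: pw left_diff_distrib sum_subtractf)
qed

lemma subst_psmult: "finite (supp p) \<Longrightarrow> subst g (psmult c p) = psmult c (subst g p)"
proof -
  assume f: "finite (supp p)"
  have s: "supp (psmult c p) \<subseteq> supp p" by (auto simp: supp_def pw)
  show ?thesis
    using f s by (subst (1 2) subst_superset[where S = "supp p"]) (auto intro!: ext simp: pw sum_distrib_left mult.assoc)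
qed

lemma supp_psum: "supp (psum f S) \<subseteq> (\<Union>x\<in>S. supp (f x))"
proof
  fix w assume "w \<in> supp (psum f S)"
  then have "(\<Sum>x\<in>S. f x w) \<noteq> 0" by (simp add: supp_def pw)
  then obtain x where "x \<in> S" "f x w \<noteq> 0" using sum.neutral[of S "\<lambda>x. f x w"] by blast
  then show "w \<in> (\<Union>x\<in>S. supp (f x))" by (auto simp: supp_def)
qed

lemma finite_supp_psum: "finite S \<Longrightarrow> (\<And>x. x \<in> S \<Longrightarrow> finite (supp (f x))) \<Longrightarrow> finite (supp (psum f S))"
  by (rule finite_subset[OF supp_psum]) auto

lemma subst_psum: "finite S \<Longrightarrow> (\<And>x. x \<in> S \<Longrightarrow> finite (supp (f x))) \<Longrightarrow>
  subst g (psum f S) = psum (\<lambda>x. subst g (f x)) S"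
proof (induction S rule: finite_induct)
  case empty
  have "supp (psum f {}) = {}" by (auto simp: supp_def pw)
  then show ?case by (auto simp: subst_def supp_def pw intro!: ext)
next
  case (insert x F)
  have e: "psum f (insert x F) = padd (f x) (psum f F)" using insert by (intro ext) (simp add: pw)
  have "subst g (psum f (insert x F)) = padd (subst g (f x)) (subst g (psum f F))"
    unfolding e using insert by (intro subst_padd finite_supp_psum) auto
  also have "subst g (psum f F) = psum (\<lambda>x. subst g (f x)) F" using insert by auto
  also have "padd (subst g (f x)) (psum (\<lambda>x. subst g (f x)) F) = psum (\<lambda>x. subst g (f x)) (insert x F)"
    by (rule ext) (simp add: pw insert.hyps)
  finally show ?case .
qed

lemma supp_mono: "supp (mono w) = {w}" by (auto simp: supp_def mono_def)
lemma finite_supp_mono[simp]: "finite (supp (mono w))" by (simp add: supp_mono)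
lemma finite_supp_pconst[simp]: "finite (supp (pconst c))"
proof -
  have "supp (pconst c) \<subseteq> {[]}" by (auto simp: supp_def pconst_def)
  then show ?thesis by (rule finite_subset) simp
qed
lemma finite_supp_pzero[simp]: "finite (supp pzero)" by (simp add: supp_def pw)
lemma finite_supp_padd[simp]: "finite (supp p) \<Longrightarrow> finite (supp q) \<Longrightarrow> finite (supp (padd p q))"
  by (rule finite_subset[of _ "supp p \<union> supp q"]) (auto simp: supp_def pw)
lemma finite_supp_pdiff[simp]: "finite (supp p) \<Longrightarrow> finite (supp q) \<Longrightarrow> finite (supp (pdiff p q))"
  by (rule finite_subset[of _ "supp p \<union> supp q"]) (auto simp: supp_def pw)
lemma finite_supp_psmult[simp]: "finite (supp p) \<Longrightarrow> finite (supp (psmult c p))"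
  by (rule finite_subset[of _ "supp p"]) (auto simp: supp_def pw)
lemma finite_supp_pmul[simp]: "finite (supp p) \<Longrightarrow> finite (supp q) \<Longrightarrow> finite (supp (pmul p q))"
proof -
  assume f: "finite (supp p)" "finite (supp q)"
  have "supp (pmul p q) \<subseteq> (\<lambda>(u, v). u @ v) ` (supp p \<times> supp q)"
  proof
    fix w assume "w \<in> supp (pmul p q)"
    then have "(\<Sum>k\<le>length w. p (take k w) * q (drop k w)) \<noteq> 0" by (simp add: supp_def pmul_def)
    then obtain k where "p (take k w) * q (drop k w) \<noteq> 0" using sum.neutral[of "{..length w}" "\<lambda>k. p (take k w) * q (drop k w)"] by blast
    then show "w \<in> (\<lambda>(u, v). u @ v) ` (supp p \<times> supp q)"
      by (intro image_eqI[of _ _ "(take k w, drop k w)"]) (auto simp: supp_def)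
  qed
  moreover have "finite ((\<lambda>(u, v). u @ v) ` (supp p \<times> supp q))" using f by simp
  ultimately show ?thesis by (rule finite_subset)
qed

lemma subst_mono: "subst g (mono w) = wimg g w"
  by (subst subst_superset[where S = "{w}"]) (simp_all add: supp_mono, rule ext, simp add: pw mono_def)

lemma subst_pzero: "subst g pzero = pzero"
  by (auto intro!: ext simp: subst_def pw)

lemma wimg_Nil: "wimg g [] = pconst 1" by (simp add: wimg_def)
lemma wimg_Cons: "wimg g (x # w) = pmul (g x) (wimg g w)" by (simp add: wimg_def)
lemma wimg_single: "wimg g [x] = g x" by (simp add: wimg_def pmul_pconst_right) (rule ext, simp add: pw)
lemma wimg_two: "wimg g [x, y] = pmul (g x) (g y)"
  by (simp add: wimg_def pmul_pconst_right) (rule arg_cong[where f = "pmul (g x)"], rule ext, simp add: pw)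

lemma subst_pconst: "subst g (pconst c) = pconst c"
proof -
  have "subst g (pconst c) = subst g (psmult c (mono []))" by (simp add: pconst_mono)
  also have "\<dots> = psmult c (pconst 1)" by (simp add: subst_psmult subst_mono wimg_Nil)
  also have "\<dots> = pconst c" by (rule ext) (simp add: pw pconst_def)
  finally show ?thesis .
qed

lemma subst_letter: "subst g (mono [x]) = g x" by (simp add: subst_mono wimg_single)
lemma subst_letter2: "subst g (mono [x, y]) = pmul (g x) (g y)" by (simp add: subst_mono wimg_two)

lemma wimg_id: "wimg (\<lambda>x. mono [x]) w = mono w"
  by (induction w) (simp_all add: wimg_Nil wimg_Cons pconst_mono mono_mul, rule ext, simp add: pw)

lemma subst_id: "finite (supp p) \<Longrightarrow> subst (\<lambda>x. mono [x]) p = p"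
  by (subst subst_superset[where S = "supp p"]) (simp_all add: wimg_id ncpoly_decomp[symmetric])

lemma pstar_ug: "pstar flipL (ug i j) = ugs i j"
  by (rule ext) (auto simp: pstar_def ug_def ugs_def mono_def flipL_def)

lemma pstar_pzero: "pstar fl pzero = pzero"
  by (rule ext) (simp add: pstar_def pw)

lemma cp_mono1: "cp c (mono [x]) = mono [(x, c)]"
  by (rule ext) (auto simp: cp_def mono_def)

lemma cp_pzero: "cp c pzero = pzero"
  by (rule ext) (simp add: cp_def pw)

lemma starideal_gen: "r \<in> R \<Longrightarrow> r \<in> starideal fl L R"
  unfolding starideal_def by (rule gideal_gen1) simp


lemma finite_qbasis[simp]: "finite (qbasis ns)"
proof -
  have "qbasis ns \<subseteq> (SIGMA b:{..<length ns}. {..<ns!b} \<times> {..<ns!b})"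
    by (auto simp: qbasis_def)
  then show ?thesis by (rule finite_subset) auto
qed

lemma qbasis_iff: "(b, r, s) \<in> qbasis ns \<longleftrightarrow> b < length ns \<and> r < ns ! b \<and> s < ns ! b"
  by (simp add: qbasis_def)

lemma qset_pos: "qset ns \<Longrightarrow> b < length ns \<Longrightarrow> 0 < ns ! b"
  by (simp add: qset_def)

lemma mc_eq_left: "mc ns c a b = (if a = (fst c, fst (snd c), fst (snd b)) then
   (if fst b = fst c \<and> snd (snd b) = snd (snd c) then complex_of_real (1 / sqrt (real (ns ! fst c))) else 0) else 0)"
  by (cases c; cases a; cases b) (auto simp: mc_def)

lemma mc_eq_right: "mc ns c a b = (if b = (fst c, snd (snd a), snd (snd c)) then
   (if fst a = fst c \<and> fst (snd a) = fst (snd c) then complex_of_real (1 / sqrt (real (ns ! fst c))) else 0) else 0)"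
  by (cases c; cases a; cases b) (auto simp: mc_def)

lemma mc_eq_out: "mc ns c a b = (if c = (fst a, fst (snd a), snd (snd b)) then
   (if fst b = fst a \<and> snd (snd a) = fst (snd b) then complex_of_real (1 / sqrt (real (ns ! fst a))) else 0) else 0)"
  by (cases c; cases a; cases b) (auto simp: mc_def)

lemma eta_eq: "eta ns (b, r, s) = (if r = s then complex_of_real (sqrt (real (ns ! b))) else 0)"
  by (simp add: eta_def)

lemma sqrt_inv_mult: "0 < n \<Longrightarrow> complex_of_real (1 / sqrt (real n)) * complex_of_real (sqrt (real n)) = 1"
  by (simp flip: of_real_mult)

lemma sqrt_mult_inv: "0 < n \<Longrightarrow> complex_of_real (sqrt (real n)) * complex_of_real (1 / sqrt (real n)) = 1"
  by (simp flip: of_real_mult)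

lemma unit_left:
  assumes q: "qset ns" and c: "c \<in> qbasis ns" and b: "b \<in> qbasis ns"
  shows "(\<Sum>a\<in>qbasis ns. mc ns c a b * eta ns a) = delta c b"
proof -
  obtain b0 r s where cc: "c = (b0, r, s)" by (cases c)
  obtain b2 r2 s2 where bb: "b = (b2, r2, s2)" by (cases b)
  have pos: "0 < ns ! b0" using c q by (simp add: cc qbasis_iff qset_pos)
  have "(\<Sum>a\<in>qbasis ns. mc ns c a b * eta ns a) =
     (if (b0, r, r2) \<in> qbasis ns then (if b2 = b0 \<and> s2 = s then complex_of_real (1 / sqrt (real (ns ! b0))) else 0) * eta ns (b0, r, r2) else 0)"
    unfolding mc_eq_left by (simp add: cc bb if_distrib[where f = "\<lambda>x. x * _"] cong: if_cong)
  also have "\<dots> = delta c b"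
    using c b pos by (auto simp: cc bb delta_def eta_eq qbasis_iff sqrt_inv_mult)
  finally show ?thesis .
qed

lemma unit_right:
  assumes q: "qset ns" and c: "c \<in> qbasis ns" and a: "a \<in> qbasis ns"
  shows "(\<Sum>b\<in>qbasis ns. mc ns c a b * eta ns b) = delta c a"
proof -
  obtain b0 r s where cc: "c = (b0, r, s)" by (cases c)
  obtain b1 r1 s1 where aa: "a = (b1, r1, s1)" by (cases a)
  have pos: "0 < ns ! b0" using c q by (simp add: cc qbasis_iff qset_pos)
  have "(\<Sum>b\<in>qbasis ns. mc ns c a b * eta ns b) =
     (if (b0, s1, s) \<in> qbasis ns then (if b1 = b0 \<and> r1 = r then complex_of_real (1 / sqrt (real (ns ! b0))) else 0) * eta ns (b0, s1, s) else 0)"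
    unfolding mc_eq_right by (simp add: cc aa if_distrib[where f = "\<lambda>x. x * _"] cong: if_cong)
  also have "\<dots> = delta c a"
    using c a pos by (auto simp: cc aa delta_def eta_eq qbasis_iff sqrt_inv_mult)
  finally show ?thesis .
qed

lemma itr_in: "c \<in> qbasis ns \<Longrightarrow> itr c \<in> qbasis ns"
  by (cases c) (auto simp: itr_def qbasis_iff)

lemma itr_itr[simp]: "itr (itr c) = c"
  by (cases c) (simp add: itr_def)

lemma unit_out:
  assumes q: "qset ns" and k: "k \<in> qbasis ns" and l: "l \<in> qbasis ns"
  shows "(\<Sum>c\<in>qbasis ns. eta ns c * mc ns c k l) = (if l = itr k then 1 else 0)"
proof -
  obtain b1 r1 s1 where kk: "k = (b1, r1, s1)" by (cases k)
  obtain b2 r2 s2 where ll: "l = (b2, r2, s2)" by (cases l)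
  have pos: "0 < ns ! b1" using k q by (simp add: kk qbasis_iff qset_pos)
  have "(\<Sum>c\<in>qbasis ns. eta ns c * mc ns c k l) =
     (if (b1, r1, s2) \<in> qbasis ns then eta ns (b1, r1, s2) * (if b2 = b1 \<and> s1 = r2 then complex_of_real (1 / sqrt (real (ns ! b1))) else 0) else 0)"
    unfolding mc_eq_out by (simp add: kk ll if_distrib[where f = "\<lambda>x. _ * x"] cong: if_cong)
  also have "\<dots> = (if l = itr k then 1 else 0)"
    using k l pos by (auto simp: kk ll itr_def eta_eq qbasis_iff sqrt_mult_inv)
  finally show ?thesis .
qed

lemma unit_both:
  assumes q: "qset ns" and c: "c \<in> qbasis ns"
  shows "(\<Sum>k\<in>qbasis ns. \<Sum>l\<in>qbasis ns. mc ns c k l * eta ns k * eta ns l) = eta ns c"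
proof -
  have "(\<Sum>k\<in>qbasis ns. \<Sum>l\<in>qbasis ns. mc ns c k l * eta ns k * eta ns l)
      = (\<Sum>k\<in>qbasis ns. eta ns k * (\<Sum>l\<in>qbasis ns. mc ns c k l * eta ns l))"
    by (simp add: sum_distrib_left mult_ac)
  also have "\<dots> = (\<Sum>k\<in>qbasis ns. eta ns k * delta c k)"
    using q c by (simp add: unit_right)
  also have "\<dots> = eta ns c" using c by (simp add: delta_def if_distrib[where f = "\<lambda>x. _ * x"] cong: if_cong)
  finally show ?thesis .
qed

lemma card_row:
  assumes "b < length ns" "r < ns ! b"
  shows "card {k \<in> qbasis ns. fst k = b \<and> fst (snd k) = r} = ns ! b"
proof -
  have "{k \<in> qbasis ns. fst k = b \<and> fst (snd k) = r} = (\<lambda>t. (b, r, t)) ` {..<ns ! b}"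
    using assms by (auto simp: qbasis_def)
  moreover have "inj_on (\<lambda>t. (b, r, t)) {..<ns ! b}" by (auto simp: inj_on_def)
  ultimately show ?thesis by (simp add: card_image)
qed

lemma schur_idm:
  assumes q: "qset ns" and c: "c \<in> qbasis ns" and d: "d \<in> qbasis ns"
  shows "schur ns idm idm c d = idm c d"
proof -
  obtain b0 r s where cc: "c = (b0, r, s)" by (cases c)
  have pos: "0 < ns ! b0" and bl: "b0 < length ns" and rs: "r < ns ! b0" "s < ns ! b0"
    using c q by (auto simp: cc qbasis_iff qset_pos)
  have "schur ns idm idm c d = (\<Sum>k\<in>qbasis ns. \<Sum>l\<in>qbasis ns. mc ns c k l * cnj (mc ns d k l))"
    unfolding schur_def idm_def
    by (simp add: if_distrib[where f = "\<lambda>x. _ * x"] if_distrib[where f = "\<lambda>x. x * _"] cong: if_cong)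
  also have "\<dots> = (\<Sum>k\<in>qbasis ns. if fst k = b0 \<and> fst (snd k) = r then
        (if c = d then complex_of_real (1 / real (ns ! b0)) else 0) else 0)"
  proof (rule sum.cong[OF refl])
    fix k assume k: "k \<in> qbasis ns"
    obtain b1 r1 s1 where kk: "k = (b1, r1, s1)" by (cases k)
    have "(\<Sum>l\<in>qbasis ns. mc ns c k l * cnj (mc ns d k l)) =
      (if (b0, s1, s) \<in> qbasis ns then (if b1 = b0 \<and> r1 = r then complex_of_real (1 / sqrt (real (ns ! b0))) else 0)
          * cnj (mc ns d k (b0, s1, s)) else 0)"
      unfolding mc_eq_right[of ns c] by (simp add: cc kk if_distrib[where f = "\<lambda>x. x * _"] cong: if_cong)
    also have "\<dots> = (if fst k = b0 \<and> fst (snd k) = r then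
        (if c = d then complex_of_real (1 / real (ns ! b0)) else 0) else 0)"
      using k pos rs bl
      by (cases d) (auto simp: cc kk qbasis_iff mc_def real_sqrt_mult[symmetric] simp flip: of_real_mult)
    finally show "(\<Sum>l\<in>qbasis ns. mc ns c k l * cnj (mc ns d k l)) = \<dots>" .
  qed
  also have "\<dots> = (if c = d then complex_of_real (1 / real (ns ! b0)) else 0) * of_nat (card (qbasis ns \<inter> {k. fst k = b0 \<and> fst (snd k) = r}))"
    by (simp add: sum.If_cases)
  also have "\<dots> = idm c d"
  proof -
    have "qbasis ns \<inter> {k. fst k = b0 \<and> fst (snd k) = r} = {k \<in> qbasis ns. fst k = b0 \<and> fst (snd k) = r}" by blast
    then show ?thesis using pos bl rs card_row[of b0 ns r] by (simp add: idm_def)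
  qed
  finally show ?thesis .
qed


lemma cnj_eta[simp]: "cnj (eta ns c) = eta ns c"
  by (cases c) (simp add: eta_def)

lemma swap6:
  fixes F :: "'a \<Rightarrow> 'a \<Rightarrow> 'a \<Rightarrow> 'a \<Rightarrow> 'a \<Rightarrow> 'a \<Rightarrow> complex"
  shows "(\<Sum>c\<in>S. \<Sum>e\<in>S. \<Sum>k\<in>S. \<Sum>l\<in>S. \<Sum>k'\<in>S. \<Sum>l'\<in>S. F c e k l k' l') =
         (\<Sum>k\<in>S. \<Sum>l\<in>S. \<Sum>k'\<in>S. \<Sum>l'\<in>S. \<Sum>c\<in>S. \<Sum>e\<in>S. F c e k l k' l')"
proof -
  have "(\<Sum>c\<in>S. \<Sum>e\<in>S. \<Sum>k\<in>S. \<Sum>l\<in>S. \<Sum>k'\<in>S. \<Sum>l'\<in>S. F c e k l k' l') =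
        (\<Sum>(c,e,k,l,k',l')\<in>S\<times>S\<times>S\<times>S\<times>S\<times>S. F c e k l k' l')"
    by (simp add: sum.cartesian_product split_def)
  also have "\<dots> = (\<Sum>(k,l,k',l',c,e)\<in>S\<times>S\<times>S\<times>S\<times>S\<times>S. F c e k l k' l')"
    by (rule sum.reindex_bij_witness[where i = "\<lambda>(k,l,k',l',c,e). (c,e,k,l,k',l')"
          and j = "\<lambda>(c,e,k,l,k',l'). (k,l,k',l',c,e)"]) auto
  also have "\<dots> = (\<Sum>k\<in>S. \<Sum>l\<in>S. \<Sum>k'\<in>S. \<Sum>l'\<in>S. \<Sum>c\<in>S. \<Sum>e\<in>S. F c e k l k' l')"
    by (simp add: sum.cartesian_product split_def)
  finally show ?thesis .
qed

lemma degree_nonneg: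
  assumes q: "qset ns" and g: "qgraph ns A" and dr: "dregular ns A d"
  shows "0 \<le> d"
proof -
  let ?B = "qbasis ns"
  let ?e = "eta ns"
  have lhs: "(\<Sum>c\<in>?B. ?e c * (\<Sum>e\<in>?B. A c e * ?e e)) = complex_of_real d * (\<Sum>c\<in>?B. ?e c * ?e c)"
    using dr unfolding dregular_def by (simp add: sum_distrib_left mult_ac)
  have "(\<Sum>c\<in>?B. ?e c * (\<Sum>e\<in>?B. A c e * ?e e)) = (\<Sum>c\<in>?B. ?e c * (\<Sum>e\<in>?B. schur ns A A c e * ?e e))"
    using g unfolding qgraph_def by (intro sum.cong refl) auto
  also have "\<dots> = (\<Sum>c\<in>?B. \<Sum>e\<in>?B. \<Sum>k\<in>?B. \<Sum>l\<in>?B. \<Sum>k'\<in>?B. \<Sum>l'\<in>?B.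
      (?e c * mc ns c k l) * (A k k' * A l l') * (cnj (mc ns e k' l') * ?e e))"
    unfolding schur_def by (simp add: sum_distrib_left sum_distrib_right mult_ac)
  also have "\<dots> = (\<Sum>k\<in>?B. \<Sum>l\<in>?B. \<Sum>k'\<in>?B. \<Sum>l'\<in>?B. \<Sum>c\<in>?B. \<Sum>e\<in>?B.
      (?e c * mc ns c k l) * (A k k' * A l l') * (cnj (mc ns e k' l') * ?e e))"
    by (rule swap6)
  also have "\<dots> = (\<Sum>k\<in>?B. \<Sum>l\<in>?B. \<Sum>k'\<in>?B. \<Sum>l'\<in>?B.
      (\<Sum>c\<in>?B. ?e c * mc ns c k l) * (A k k' * A l l') * cnj (\<Sum>e\<in>?B. ?e e * mc ns e k' l'))"
    by (simp add: sum_distrib_left sum_distrib_right mult_ac)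
  also have "\<dots> = (\<Sum>k\<in>?B. \<Sum>l\<in>?B. \<Sum>k'\<in>?B. \<Sum>l'\<in>?B.
      (if l = itr k then 1 else 0) * (A k k' * A l l') * (if l' = itr k' then 1 else 0))"
    using q by (intro sum.cong refl) (simp add: unit_out)
  also have "\<dots> = (\<Sum>k\<in>?B. \<Sum>l\<in>?B. \<Sum>k'\<in>?B. if l = itr k then A k k' * A (itr k) (itr k') else 0)"
    by (simp add: if_distrib[where f = "\<lambda>x. x * _"] if_distrib[where f = "\<lambda>x. _ * x"] itr_in cong: if_cong)
  also have "\<dots> = (\<Sum>k\<in>?B. \<Sum>k'\<in>?B. \<Sum>l\<in>?B. if l = itr k then A k k' * A (itr k) (itr k') else 0)"
    by (intro sum.cong refl sum.swap)
  also have "\<dots> = (\<Sum>k\<in>?B. \<Sum>k'\<in>?B. A k k' * A (itr k) (itr k'))"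
    by (intro sum.cong refl) (simp add: itr_in)
  also have "\<dots> = (\<Sum>k\<in>?B. \<Sum>k'\<in>?B. complex_of_real ((cmod (A k k'))\<^sup>2))"
  proof (intro sum.cong refl)
    fix k k' assume "k \<in> ?B" "k' \<in> ?B"
    then have "barm A k k' = A k k'" using g by (simp add: qgraph_def)
    then have "A (itr k) (itr k') = cnj (A k k')" unfolding barm_def by (metis complex_cnj_cnj)
    then show "A k k' * A (itr k) (itr k') = complex_of_real ((cmod (A k k'))\<^sup>2)"
      using complex_norm_square[of "A k k'"] by simp
  qed
  finally have eq: "complex_of_real d * (\<Sum>c\<in>?B. ?e c * ?e c) = complex_of_real (\<Sum>k\<in>?B. \<Sum>k'\<in>?B. (cmod (A k k'))\<^sup>2)"
    using lhs by simp
  define x where "x = (\<Sum>c\<in>?B. (if fst (snd c) = snd (snd c) then real (ns ! fst c) else 0))"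
  have ex: "(\<Sum>c\<in>?B. ?e c * ?e c) = complex_of_real x"
    unfolding x_def of_real_sum
  proof (intro sum.cong refl)
    fix c :: idx
    obtain b r s where cc: "c = (b, r, s)" by (cases c)
    show "?e c * ?e c = complex_of_real (if fst (snd c) = snd (snd c) then real (ns ! fst c) else 0)"
      by (simp add: cc eta_def flip: of_real_mult)
  qed
  have in0: "(0, 0, 0) \<in> ?B" using q by (auto simp: qset_def qbasis_iff)
  have "0 < x" unfolding x_def
  proof (rule sum_pos2[OF finite_qbasis in0])
    show "0 < (if fst (snd (0::nat, 0::nat, 0::nat)) = snd (snd (0::nat, 0::nat, 0::nat)) then real (ns ! fst (0::nat, 0::nat, 0::nat)) else 0)"
      using q by (simp add: qset_def)
  qed auto
  have "complex_of_real (d * x) = complex_of_real (\<Sum>k\<in>?B. \<Sum>k'\<in>?B. (cmod (A k k'))\<^sup>2)"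
    using eq ex by simp
  then have dx: "d * x = (\<Sum>k\<in>?B. \<Sum>k'\<in>?B. (cmod (A k k'))\<^sup>2)"
    by (rule of_real_eq_iff[THEN iffD1])
  have "0 \<le> (\<Sum>k\<in>?B. \<Sum>k'\<in>?B. (cmod (A k k'))\<^sup>2)" by (intro sum_nonneg) auto
  then have "0 \<le> d * x" using dx by simp
  then show ?thesis using \<open>0 < x\<close> by (simp add: zero_le_mult_iff)
qed


locale cs =
  fixes ns :: "nat list" and n :: nat and As :: "nat \<Rightarrow> lmap" and dg :: "nat \<Rightarrow> real"
  assumes qs: "qset ns"
    and gr: "\<And>a. a \<in> {1..n} \<Longrightarrow> qgraph ns (As a)"
    and dreg: "\<And>a. a \<in> {1..n} \<Longrightarrow> dregular ns (As a) (dg a)"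
begin

abbreviation "K \<equiv> length ns"
abbreviation "B \<equiv> qbasis ns"

definition ns2 :: "nat list" where "ns2 = map (\<lambda>b. ns ! (b mod K)) [0..<Suc n * K]"
abbreviation "B2 \<equiv> qbasis ns2"

definition cpy :: "idx \<Rightarrow> nat" where "cpy c = fst c div K"
definition red :: "idx \<Rightarrow> idx" where "red c = (fst c mod K, fst (snd c), snd (snd c))"
definition sh :: "nat \<Rightarrow> idx \<Rightarrow> idx" where "sh a c = (a * K + fst c, fst (snd c), snd (snd c))"

definition Blk :: "nat \<Rightarrow> nat \<Rightarrow> lmap" where
  "Blk a b x y = (if a = b \<and> 1 \<le> a then As a x y else 0) + (if a = Suc b then idm x y else 0)"

definition Ap :: lmap where "Ap c d = Blk (cpy c) (cpy d) (red c) (red d)"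

lemma Kpos: "0 < K" using qs by (simp add: qset_def)

lemma ns2_nth: "b < Suc n * K \<Longrightarrow> ns2 ! b = ns ! (b mod K)"
  by (simp add: ns2_def)

lemma len_ns2: "length ns2 = Suc n * K" by (simp add: ns2_def)

lemma B2_iff: "c \<in> B2 \<longleftrightarrow> cpy c \<le> n \<and> red c \<in> B"
proof -
  obtain b r s where cc: "c = (b, r, s)" by (cases c)
  have "b < Suc n * K \<longleftrightarrow> b div K \<le> n"
    using Kpos by (metis less_Suc_eq_le less_mult_imp_div_less div_less_iff_less_mult mult.commute)
  moreover have "b mod K < K" using Kpos by simp
  ultimately show ?thesis
    by (auto simp: cc qbasis_iff cpy_def red_def len_ns2 ns2_nth)
qed

lemma B_fst: "x \<in> B \<Longrightarrow> fst x < K" by (cases x) (simp add: qbasis_iff)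

lemma cpy_sh[simp]: "x \<in> B \<Longrightarrow> cpy (sh a x) = a"
  using B_fst[of x] Kpos by (simp add: cpy_def sh_def)

lemma red_sh[simp]: "x \<in> B \<Longrightarrow> red (sh a x) = x"
  using B_fst[of x] by (cases x) (simp add: red_def sh_def)

lemma sh_red[simp]: "sh (cpy c) (red c) = c"
  by (cases c) (simp add: cpy_def red_def sh_def)

lemma sh_in: "x \<in> B \<Longrightarrow> a \<le> n \<Longrightarrow> sh a x \<in> B2"
  by (simp add: B2_iff)

lemma red_in: "c \<in> B2 \<Longrightarrow> red c \<in> B" by (simp add: B2_iff)
lemma cpy_le: "c \<in> B2 \<Longrightarrow> cpy c \<le> n" by (simp add: B2_iff)

lemma sh0[simp]: "sh 0 x = x" by (cases x) (simp add: sh_def)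

lemma B_sub: "x \<in> B \<Longrightarrow> x \<in> B2"
  using sh_in[of x 0] by simp

lemma cpy_B: "x \<in> B \<Longrightarrow> cpy x = 0"
  using cpy_sh[of x 0] by simp
lemma red_B: "x \<in> B \<Longrightarrow> red x = x"
  using red_sh[of x 0] by simp

lemma sh_inj: "x \<in> B \<Longrightarrow> y \<in> B \<Longrightarrow> sh a x = sh b y \<longleftrightarrow> a = b \<and> x = y"
  by (metis cpy_sh red_sh)

lemma B2_eq: "c \<in> B2 \<Longrightarrow> cpy c = a \<Longrightarrow> c = sh a (red c)"
  by auto

lemma qset2: "qset ns2"
proof -
  have "ns2 \<noteq> []" using Kpos by (simp add: ns2_def)
  moreover have "\<forall>b<length ns2. 0 < ns2 ! b"
    using qs Kpos by (auto simp: len_ns2 ns2_nth qset_def)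
  ultimately show ?thesis by (simp add: qset_def)
qed

lemma sum_B2: "(\<Sum>c\<in>B2. f c) = (\<Sum>a\<le>n. \<Sum>x\<in>B. f (sh a x))"
proof -
  have "(\<Sum>c\<in>B2. f c) = (\<Sum>(a, x)\<in>{..n} \<times> B. f (sh a x))"
    by (rule sum.reindex_bij_witness[where i = "\<lambda>(a, x). sh a x" and j = "\<lambda>c. (cpy c, red c)"])
       (auto simp: sh_in red_in cpy_le)
  also have "\<dots> = (\<Sum>a\<le>n. \<Sum>x\<in>B. f (sh a x))" by (simp add: sum.cartesian_product)
  finally show ?thesis .
qed

lemma sum_copy:
  assumes "a \<le> n" "\<And>c. c \<in> B2 \<Longrightarrow> cpy c \<noteq> a \<Longrightarrow> f c = 0"
  shows "(\<Sum>c\<in>B2. f c) = (\<Sum>x\<in>B. f (sh a x))"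
proof -
  have "(\<Sum>c\<in>B2. f c) = (\<Sum>b\<le>n. \<Sum>x\<in>B. f (sh b x))" by (rule sum_B2)
  also have "\<dots> = (\<Sum>x\<in>B. f (sh a x))"
  proof (rule sum.mono_neutral_right[THEN trans])
    show "(\<Sum>b\<in>{a}. \<Sum>x\<in>B. f (sh b x)) = (\<Sum>x\<in>B. f (sh a x))" by simp
  qed (use assms in \<open>auto simp: sh_in\<close>)
  finally show ?thesis .
qed

lemma psum_copy:
  assumes "a \<le> n" "\<And>c. c \<in> B2 \<Longrightarrow> cpy c \<noteq> a \<Longrightarrow> f c = pzero"
  shows "psum f B2 = psum (\<lambda>x. f (sh a x)) B"
proof (rule ext)
  fix w
  have "(\<Sum>c\<in>B2. f c w) = (\<Sum>x\<in>B. f (sh a x) w)"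
    by (rule sum_copy) (use assms in \<open>auto simp: pzero_app\<close>)
  then show "psum f B2 w = psum (\<lambda>x. f (sh a x)) B w" by (simp add: pw)
qed

lemma mc2: "c \<in> B2 \<Longrightarrow> mc ns2 c k l = (if cpy k = cpy c \<and> cpy l = cpy c then mc ns (red c) (red k) (red l) else 0)"
proof -
  assume c: "c \<in> B2"
  obtain b r s where cc: "c = (b, r, s)" by (cases c)
  obtain b1 r1 s1 where kk: "k = (b1, r1, s1)" by (cases k)
  obtain b2 r2 s2 where ll: "l = (b2, r2, s2)" by (cases l)
  have bl: "b < Suc n * K" using c by (simp add: cc qbasis_iff len_ns2)
  have e: "\<And>x y. (x = y) \<longleftrightarrow> (x div K = y div K \<and> x mod K = y mod K)"
    by (metis div_mult_mod_eq)
  show ?thesis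
    using bl by (simp add: cc kk ll mc_def cpy_def red_def ns2_nth) (use e in blast)
qed

lemma eta2: "c \<in> B2 \<Longrightarrow> eta ns2 c = eta ns (red c)"
  by (cases c) (simp add: eta_def red_def ns2_nth qbasis_iff len_ns2)

lemma cpy_itr[simp]: "cpy (itr c) = cpy c" by (cases c) (simp add: itr_def cpy_def)
lemma red_itr[simp]: "red (itr c) = itr (red c)" by (cases c) (simp add: itr_def red_def)

lemma sum2_left:
  assumes c: "c \<in> B2"
  shows "(\<Sum>k\<in>B2. \<Sum>l\<in>B2. mc ns2 c k l * G k l) = (\<Sum>x\<in>B. \<Sum>y\<in>B. mc ns (red c) x y * G (sh (cpy c) x) (sh (cpy c) y))"
proof -
  have a: "cpy c \<le> n" using c by (rule cpy_le)
  have "(\<Sum>k\<in>B2. \<Sum>l\<in>B2. mc ns2 c k l * G k l) = (\<Sum>x\<in>B. \<Sum>l\<in>B2. mc ns2 c (sh (cpy c) x) l * G (sh (cpy c) x) l)"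
    by (rule sum_copy[OF a]) (simp add: mc2[OF c])
  also have "\<dots> = (\<Sum>x\<in>B. \<Sum>y\<in>B. mc ns2 c (sh (cpy c) x) (sh (cpy c) y) * G (sh (cpy c) x) (sh (cpy c) y))"
    by (intro sum.cong refl sum_copy[OF a]) (simp add: mc2[OF c])
  also have "\<dots> = (\<Sum>x\<in>B. \<Sum>y\<in>B. mc ns (red c) x y * G (sh (cpy c) x) (sh (cpy c) y))"
    by (intro sum.cong refl) (simp add: mc2[OF c])
  finally show ?thesis .
qed

lemma sum2_right:
  assumes d: "d \<in> B2"
  shows "(\<Sum>k\<in>B2. \<Sum>l\<in>B2. G k l * cnj (mc ns2 d k l)) = (\<Sum>x\<in>B. \<Sum>y\<in>B. G (sh (cpy d) x) (sh (cpy d) y) * cnj (mc ns (red d) x y))"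
proof -
  have a: "cpy d \<le> n" using d by (rule cpy_le)
  have "(\<Sum>k\<in>B2. \<Sum>l\<in>B2. G k l * cnj (mc ns2 d k l)) = (\<Sum>x\<in>B. \<Sum>l\<in>B2. G (sh (cpy d) x) l * cnj (mc ns2 d (sh (cpy d) x) l))"
    by (rule sum_copy[OF a]) (simp add: mc2[OF d])
  also have "\<dots> = (\<Sum>x\<in>B. \<Sum>y\<in>B. G (sh (cpy d) x) (sh (cpy d) y) * cnj (mc ns2 d (sh (cpy d) x) (sh (cpy d) y)))"
    by (intro sum.cong refl sum_copy[OF a]) (simp add: mc2[OF d])
  also have "\<dots> = (\<Sum>x\<in>B. \<Sum>y\<in>B. G (sh (cpy d) x) (sh (cpy d) y) * cnj (mc ns (red d) x y))"
    by (intro sum.cong refl) (simp add: mc2[OF d])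
  finally show ?thesis .
qed

lemma Blk_graph:
  assumes "a \<le> n" "b \<le> n"
  shows "qgraph ns (Blk a b)"
proof -
  have sch: "schur ns (Blk a b) (Blk a b) c d = Blk a b c d \<and> barm (Blk a b) c d = Blk a b c d"
    if c: "c \<in> B" and d: "d \<in> B" for c d
  proof (cases "a = b \<and> 1 \<le> a")
    case True
    then have "Blk a b = As a" using True by (auto simp: Blk_def intro!: ext)
    then show ?thesis using gr[of a] True assms c d by (auto simp: qgraph_def)
  next
    case F: False
    show ?thesis
    proof (cases "a = Suc b")
      case True
      then have "Blk a b = idm" using F by (auto simp: Blk_def intro!: ext)
      moreover have "barm idm c d = idm c d"
        by (auto simp: barm_def idm_def) (metis itr_itr)
      ultimately show ?thesis using schur_idm[OF qs c d] by simp
    next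
      case False
      then have "Blk a b = (\<lambda>x y. 0)" using F by (auto simp: Blk_def intro!: ext)
      then show ?thesis by (simp add: schur_def barm_def)
    qed
  qed
  then show ?thesis by (simp add: qgraph_def)
qed

lemma qgraph2: "qgraph ns2 Ap"
  unfolding qgraph_def
proof (intro ballI conjI)
  fix c d assume c: "c \<in> B2" and d: "d \<in> B2"
  let ?M = "Blk (cpy c) (cpy d)"
  have g: "qgraph ns ?M" using c d by (intro Blk_graph cpy_le)
  have rc: "red c \<in> B" and rd: "red d \<in> B" using c d by (auto simp: red_in)
  have "schur ns2 Ap Ap c d = (\<Sum>k\<in>B2. \<Sum>l\<in>B2. mc ns2 c k l *
          (\<Sum>k'\<in>B2. \<Sum>l'\<in>B2. (Ap k k' * Ap l l') * cnj (mc ns2 d k' l')))"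
    unfolding schur_def by (simp add: sum_distrib_left mult_ac)
  also have "\<dots> = (\<Sum>x\<in>B. \<Sum>y\<in>B. mc ns (red c) x y *
          (\<Sum>x'\<in>B. \<Sum>y'\<in>B. (?M x x' * ?M y y') * cnj (mc ns (red d) x' y')))"
    by (simp add: sum2_left[OF c] sum2_right[OF d] Ap_def)
  also have "\<dots> = schur ns ?M ?M (red c) (red d)"
    unfolding schur_def by (simp add: sum_distrib_left mult_ac)
  also have "\<dots> = Ap c d" using g rc rd by (simp add: qgraph_def Ap_def)
  finally show "schur ns2 Ap Ap c d = Ap c d" .
  show "barm Ap c d = Ap c d"
    using g rc rd by (simp add: qgraph_def Ap_def barm_def)
qed

end


lemma swap4:
  fixes F :: "'a \<Rightarrow> 'a \<Rightarrow> 'a \<Rightarrow> 'a \<Rightarrow> 'b::comm_monoid_add"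
  shows "(\<Sum>k\<in>S. \<Sum>l\<in>S. \<Sum>a\<in>S. \<Sum>b\<in>S. F k l a b) = (\<Sum>a\<in>S. \<Sum>b\<in>S. \<Sum>k\<in>S. \<Sum>l\<in>S. F k l a b)"
proof -
  have "(\<Sum>k\<in>S. \<Sum>l\<in>S. \<Sum>a\<in>S. \<Sum>b\<in>S. F k l a b) = (\<Sum>(k,l,a,b)\<in>S\<times>S\<times>S\<times>S. F k l a b)"
    by (simp add: sum.cartesian_product split_def)
  also have "\<dots> = (\<Sum>(a,b,k,l)\<in>S\<times>S\<times>S\<times>S. F k l a b)"
    by (rule sum.reindex_bij_witness[where i = "\<lambda>(a,b,k,l). (k,l,a,b)" and j = "\<lambda>(k,l,a,b). (a,b,k,l)"]) auto
  also have "\<dots> = (\<Sum>a\<in>S. \<Sum>b\<in>S. \<Sum>k\<in>S. \<Sum>l\<in>S. F k l a b)"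
    by (simp add: sum.cartesian_product split_def)
  finally show ?thesis .
qed

declare eqv_trans[trans] eq_eqv_trans[trans] eqv_eq_trans[trans]

lemma ug_mono: "ug i j = mono [(i, j, False)]" by (simp add: ug_def)
lemma ugs_mono: "ugs i j = mono [(i, j, True)]" by (simp add: ugs_def)

lemma lett_iff: "(i, j, b) \<in> lett S \<longleftrightarrow> i \<in> S \<and> j \<in> S" by (simp add: lett_def)

lemma ug_ncpoly: "i \<in> S \<Longrightarrow> j \<in> S \<Longrightarrow> ug i j \<in> ncpoly (lett S)"
  by (simp add: ug_mono ncpoly_mono lett_iff)
lemma ugs_ncpoly: "i \<in> S \<Longrightarrow> j \<in> S \<Longrightarrow> ugs i j \<in> ncpoly (lett S)"
  by (simp add: ugs_mono ncpoly_mono lett_iff)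

context cs begin

definition R2 :: "letter ncp set" where "R2 = qut_rel ns2 {Ap}"
definition G :: "letter ncp set" where "G = gideal (lett B2) (R2 \<union> pstar flipL ` R2)"

lemma G_star: "starideal flipL (lett B2) R2 = G" by (simp add: starideal_def G_def)

lemma R2_G: "r \<in> R2 \<Longrightarrow> r \<in> G" unfolding G_def by (rule gideal_gen1) simp

lemma eqv_R2: "pdiff p q \<in> R2 \<Longrightarrow> eqv G p q" by (simp add: eqv_def R2_G)

lemma rel_unit2: "i \<in> B2 \<Longrightarrow> pdiff (psum (\<lambda>j. psmult (eta ns2 j) (ug i j)) B2) (pconst (eta ns2 i)) \<in> R2"
  unfolding R2_def qut_rel_def rel_qset_def by (rule UnI1, rule UnI2, blast)

lemma rel_graph2: "i \<in> B2 \<Longrightarrow> j \<in> B2 \<Longrightarrow>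
   pdiff (psum (\<lambda>k. psmult (Ap k j) (ug i k)) B2) (psum (\<lambda>k. psmult (Ap i k) (ug k j)) B2) \<in> R2"
  unfolding R2_def qut_rel_def rel_graph_def by (rule UnI2, blast)

lemma rel_mult2: "c \<in> B2 \<Longrightarrow> k \<in> B2 \<Longrightarrow> l \<in> B2 \<Longrightarrow>
   pdiff (psum (\<lambda>a. psum (\<lambda>b. psmult (mc ns2 c a b) (pmul (ug a k) (ug b l))) B2) B2)
         (psum (\<lambda>d. psmult (mc ns2 d k l) (ug c d)) B2) \<in> R2"
  unfolding R2_def qut_rel_def rel_qset_def by (rule UnI1, rule UnI1, rule UnI2, blast)

abbreviation "GL \<equiv> gideal (lett B2) (R2 \<union> pstar flipL ` R2)"

definition fixedv :: "(idx \<Rightarrow> complex) \<Rightarrow> bool" where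
  "fixedv f \<longleftrightarrow> (\<forall>i\<in>B2. eqv G (psum (\<lambda>j. psmult (f j) (ug i j)) B2) (pconst (f i)))"

lemma fixed_eta: "fixedv (eta ns2)"
  unfolding fixedv_def using rel_unit2 by (simp add: eqv_R2)

lemma fixed_lin:
  assumes "fixedv f" "fixedv g"
  shows "fixedv (\<lambda>j. \<alpha> * f j + \<beta> * g j)"
  unfolding fixedv_def
proof
  fix i assume i: "i \<in> B2"
  have h: "eqv GL (padd (psmult \<alpha> (psum (\<lambda>j. psmult (f j) (ug i j)) B2)) (psmult \<beta> (psum (\<lambda>j. psmult (g j) (ug i j)) B2)))
      (padd (psmult \<alpha> (pconst (f i))) (psmult \<beta> (pconst (g i))))"
    using assms i unfolding fixedv_def G_def by (intro eqv_padd eqv_psmult) auto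
  have e1: "padd (psmult \<alpha> (psum (\<lambda>j. psmult (f j) (ug i j)) B2)) (psmult \<beta> (psum (\<lambda>j. psmult (g j) (ug i j)) B2))
      = psum (\<lambda>j. psmult (\<alpha> * f j + \<beta> * g j) (ug i j)) B2"
    by (rule ext) (simp add: pw sum_distrib_left sum.distrib algebra_simps)
  have e2: "padd (psmult \<alpha> (pconst (f i))) (psmult \<beta> (pconst (g i))) = pconst (\<alpha> * f i + \<beta> * g i)"
    by (rule ext) (simp add: pw pconst_app)
  show "eqv G (psum (\<lambda>j. psmult (\<alpha> * f j + \<beta> * g j) (ug i j)) B2) (pconst (\<alpha> * f i + \<beta> * g i))"
    using h unfolding e1 e2 G_def .
qed

lemma fixed_cong: "fixedv f \<Longrightarrow> (\<And>j. j \<in> B2 \<Longrightarrow> f j = g j) \<Longrightarrow> fixedv g"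
proof -
  assume f: "fixedv f" and e: "\<And>j. j \<in> B2 \<Longrightarrow> f j = g j"
  have "psum (\<lambda>j. psmult (f j) (ug i j)) B2 = psum (\<lambda>j. psmult (g j) (ug i j)) B2" for i
    using e by (intro ext) (simp add: pw)
  then show ?thesis using f e unfolding fixedv_def by simp
qed

lemma fixed_A:
  assumes f: "fixedv f"
  shows "fixedv (\<lambda>i. \<Sum>e\<in>B2. Ap i e * f e)"
  unfolding fixedv_def
proof
  fix i assume i: "i \<in> B2"
  have "psum (\<lambda>j. psmult (\<Sum>e\<in>B2. Ap j e * f e) (ug i j)) B2
      = psum (\<lambda>e. psmult (f e) (psum (\<lambda>j. psmult (Ap j e) (ug i j)) B2)) B2"
    by (rule ext) (simp add: pw sum_distrib_left sum_distrib_right mult_ac, rule sum.swap)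
  also have "eqv GL \<dots> (psum (\<lambda>e. psmult (f e) (psum (\<lambda>k. psmult (Ap i k) (ug k e)) B2)) B2)"
  proof (rule eqv_psum[OF finite_qbasis], rule eqv_psmult)
    fix e assume "e \<in> B2"
    then show "eqv GL (psum (\<lambda>j. psmult (Ap j e) (ug i j)) B2) (psum (\<lambda>k. psmult (Ap i k) (ug k e)) B2)"
      using i rel_graph2 eqv_R2[unfolded G_def] by blast
  qed
  also have "psum (\<lambda>e. psmult (f e) (psum (\<lambda>k. psmult (Ap i k) (ug k e)) B2)) B2
      = psum (\<lambda>k. psmult (Ap i k) (psum (\<lambda>e. psmult (f e) (ug k e)) B2)) B2"
    by (rule ext) (simp add: pw sum_distrib_left mult_ac, rule sum.swap)
  also have "eqv GL \<dots> (psum (\<lambda>k. psmult (Ap i k) (pconst (f k))) B2)"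
    using f unfolding fixedv_def G_def by (intro eqv_psum eqv_psmult) auto
  also have "psum (\<lambda>k. psmult (Ap i k) (pconst (f k))) B2 = pconst (\<Sum>e\<in>B2. Ap i e * f e)"
    by (rule ext) (simp add: pw pconst_app)
  finally show "eqv G (psum (\<lambda>j. psmult (\<Sum>e\<in>B2. Ap j e * f e) (ug i j)) B2) (pconst (\<Sum>e\<in>B2. Ap i e * f e))"
    by (simp add: G_def)
qed

end


lemma swap3: "(\<Sum>d\<in>S. \<Sum>k\<in>T. \<Sum>l\<in>U. F d k l) = (\<Sum>k\<in>T. \<Sum>l\<in>U. \<Sum>d\<in>S. F d k l)"
proof -
  have "(\<Sum>d\<in>S. \<Sum>k\<in>T. \<Sum>l\<in>U. F d k l) = (\<Sum>k\<in>T. \<Sum>d\<in>S. \<Sum>l\<in>U. F d k l)" by (rule sum.swap)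
  also have "\<dots> = (\<Sum>k\<in>T. \<Sum>l\<in>U. \<Sum>d\<in>S. F d k l)" by (intro sum.cong refl sum.swap)
  finally show ?thesis .
qed

lemma swap4': "(\<Sum>k\<in>S1. \<Sum>l\<in>S2. \<Sum>a\<in>S3. \<Sum>b\<in>S4. F k l a b) = (\<Sum>a\<in>S3. \<Sum>b\<in>S4. \<Sum>k\<in>S1. \<Sum>l\<in>S2. F k l a b)"
proof -
  have "(\<Sum>k\<in>S1. \<Sum>l\<in>S2. \<Sum>a\<in>S3. \<Sum>b\<in>S4. F k l a b) = (\<Sum>k\<in>S1. \<Sum>a\<in>S3. \<Sum>b\<in>S4. \<Sum>l\<in>S2. F k l a b)"
    by (intro sum.cong refl swap3)
  also have "\<dots> = (\<Sum>a\<in>S3. \<Sum>b\<in>S4. \<Sum>k\<in>S1. \<Sum>l\<in>S2. F k l a b)" by (rule swap3)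
  finally show ?thesis .
qed

lemma id1: fixes u :: "'a \<Rightarrow> complex" shows
  "(\<Sum>d\<in>S. (\<Sum>k\<in>S. \<Sum>l\<in>S. m d k l * f k * g l) * u d) = (\<Sum>k\<in>S. \<Sum>l\<in>S. f k * g l * (\<Sum>d\<in>S. m d k l * u d))"
proof -
  have "(\<Sum>d\<in>S. (\<Sum>k\<in>S. \<Sum>l\<in>S. m d k l * f k * g l) * u d) = (\<Sum>d\<in>S. \<Sum>k\<in>S. \<Sum>l\<in>S. f k * g l * (m d k l * u d))"
    by (simp add: sum_distrib_right) (simp add: mult_ac)
  also have "\<dots> = (\<Sum>k\<in>S. \<Sum>l\<in>S. \<Sum>d\<in>S. f k * g l * (m d k l * u d))" by (rule swap3)
  also have "\<dots> = (\<Sum>k\<in>S. \<Sum>l\<in>S. f k * g l * (\<Sum>d\<in>S. m d k l * u d))" by (simp add: sum_distrib_left)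
  finally show ?thesis .
qed

lemma id2: fixes P :: "'a \<Rightarrow> 'a \<Rightarrow> 'a \<Rightarrow> 'a \<Rightarrow> complex" shows
  "(\<Sum>k\<in>S. \<Sum>l\<in>S. (f k * g l) * (\<Sum>a\<in>S. \<Sum>b\<in>S. m a b * P a k b l)) = (\<Sum>a\<in>S. \<Sum>b\<in>S. m a b * (\<Sum>k\<in>S. \<Sum>l\<in>S. (f k * g l) * P a k b l))"
proof -
  have "(\<Sum>k\<in>S. \<Sum>l\<in>S. (f k * g l) * (\<Sum>a\<in>S. \<Sum>b\<in>S. m a b * P a k b l)) = (\<Sum>k\<in>S. \<Sum>l\<in>S. \<Sum>a\<in>S. \<Sum>b\<in>S. m a b * ((f k * g l) * P a k b l))"
    by (simp add: sum_distrib_left) (simp add: mult_ac)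
  also have "\<dots> = (\<Sum>a\<in>S. \<Sum>b\<in>S. \<Sum>k\<in>S. \<Sum>l\<in>S. m a b * ((f k * g l) * P a k b l))" by (rule swap4')
  also have "\<dots> = (\<Sum>a\<in>S. \<Sum>b\<in>S. m a b * (\<Sum>k\<in>S. \<Sum>l\<in>S. (f k * g l) * P a k b l))" by (simp add: sum_distrib_left)
  finally show ?thesis .
qed

lemma id4: fixes Q :: "'a \<Rightarrow> 'a \<Rightarrow> 'a \<Rightarrow> complex" shows
  "(\<Sum>k\<in>S. f k * (\<Sum>a\<in>S. \<Sum>b\<in>S. m a b * Q a k b)) = (\<Sum>a\<in>S. \<Sum>b\<in>S. m a b * (\<Sum>k\<in>S. f k * Q a k b))"
proof -
  have "(\<Sum>k\<in>S. f k * (\<Sum>a\<in>S. \<Sum>b\<in>S. m a b * Q a k b)) = (\<Sum>k\<in>S. \<Sum>a\<in>S. \<Sum>b\<in>S. m a b * (f k * Q a k b))"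
    by (simp add: sum_distrib_left) (simp add: mult_ac)
  also have "\<dots> = (\<Sum>a\<in>S. \<Sum>b\<in>S. \<Sum>k\<in>S. m a b * (f k * Q a k b))" by (rule swap3)
  also have "\<dots> = (\<Sum>a\<in>S. \<Sum>b\<in>S. m a b * (\<Sum>k\<in>S. f k * Q a k b))" by (simp add: sum_distrib_left)
  finally show ?thesis .
qed

lemma id5: fixes u :: "'a \<Rightarrow> complex" shows
  "(\<Sum>a\<in>S. \<Sum>b\<in>S. m a b * (f a * u b)) = (\<Sum>b\<in>S. (\<Sum>a\<in>S. m a b * f a) * u b)"
proof -
  have "(\<Sum>a\<in>S. \<Sum>b\<in>S. m a b * (f a * u b)) = (\<Sum>b\<in>S. \<Sum>a\<in>S. m a b * (f a * u b))" by (rule sum.swap)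
  also have "\<dots> = (\<Sum>b\<in>S. (\<Sum>a\<in>S. m a b * f a) * u b)" by (simp add: sum_distrib_right mult.assoc)
  finally show ?thesis .
qed

lemma id6: fixes u :: "'a \<Rightarrow> complex" shows
  "(\<Sum>k\<in>S. f k * (\<Sum>d\<in>S. m d k * u d)) = (\<Sum>d\<in>S. (\<Sum>k\<in>S. m d k * f k) * u d)"
  by (simp add: sum_distrib_right sum_distrib_left mult_ac) (rule sum.swap)


lemma delta_sum1: "finite S \<Longrightarrow> l \<in> S \<Longrightarrow> (\<Sum>d\<in>S. (\<beta> d * delta d l) * u d) = \<beta> l * (u l :: complex)"
  by (subst sum.remove[of S l]) (auto simp: delta_def intro!: sum.neutral)
lemma delta_sum2: "finite S \<Longrightarrow> c \<in> S \<Longrightarrow> (\<Sum>d\<in>S. (b * delta c d) * u d) = b * (u c :: complex)"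
  by (subst sum.remove[of S c]) (auto simp: delta_def split: if_splits intro!: sum.neutral)

context cs begin

lemma lin_ncpoly: "b \<in> B2 \<Longrightarrow> psum (\<lambda>l. psmult (g l) (ug b l)) B2 \<in> ncpoly (lett B2)"
  by (intro ncpoly_psum ncpoly_psmult ug_ncpoly) auto

lemma fixed_mul:
  assumes f: "fixedv f" and g: "fixedv g"
  shows "fixedv (\<lambda>c. \<Sum>k\<in>B2. \<Sum>l\<in>B2. mc ns2 c k l * f k * g l)"
  unfolding fixedv_def
proof
  fix c assume c: "c \<in> B2"
  let ?P = "\<lambda>a k b l. pmul (ug a k) (ug b l)"
  have "psum (\<lambda>d. psmult (\<Sum>k\<in>B2. \<Sum>l\<in>B2. mc ns2 d k l * f k * g l) (ug c d)) B2
     = psum (\<lambda>k. psum (\<lambda>l. psmult (f k * g l) (psum (\<lambda>d. psmult (mc ns2 d k l) (ug c d)) B2)) B2) B2"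
    by (rule ext) (unfold pw, rule id1)
  also have "eqv GL \<dots> (psum (\<lambda>k. psum (\<lambda>l. psmult (f k * g l)
        (psum (\<lambda>a. psum (\<lambda>b. psmult (mc ns2 c a b) (?P a k b l)) B2) B2)) B2) B2)"
  proof (rule eqv_psum[OF finite_qbasis], rule eqv_psum[OF finite_qbasis], rule eqv_psmult)
    fix k l assume "k \<in> B2" "l \<in> B2"
    then show "eqv GL (psum (\<lambda>d. psmult (mc ns2 d k l) (ug c d)) B2)
        (psum (\<lambda>a. psum (\<lambda>b. psmult (mc ns2 c a b) (?P a k b l)) B2) B2)"
      using c rel_mult2 eqv_R2[unfolded G_def] eqv_sym by blast
  qed
  also have "psum (\<lambda>k. psum (\<lambda>l. psmult (f k * g l)
        (psum (\<lambda>a. psum (\<lambda>b. psmult (mc ns2 c a b) (?P a k b l)) B2) B2)) B2) B2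
     = psum (\<lambda>a. psum (\<lambda>b. psmult (mc ns2 c a b) (pmul (psum (\<lambda>k. psmult (f k) (ug a k)) B2)
           (psum (\<lambda>l. psmult (g l) (ug b l)) B2))) B2) B2"
  proof -
    have "pmul (psum (\<lambda>k. psmult (f k) (ug a k)) B2) (psum (\<lambda>l. psmult (g l) (ug b l)) B2)
        = psum (\<lambda>k. psum (\<lambda>l. psmult (f k * g l) (?P a k b l)) B2) B2" for a b
      by (simp only: pmul_psum_left, simp only: pmul_psum_right pmul_psmult_left pmul_psmult_right)
         (rule ext, simp add: pw sum_distrib_left mult_ac)
    then show ?thesis
      by (simp only:) (rule ext, unfold pw, rule id2)
  qed
  also have "eqv GL \<dots> (psum (\<lambda>a. psum (\<lambda>b. psmult (mc ns2 c a b) (pmul (pconst (f a))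
           (psum (\<lambda>l. psmult (g l) (ug b l)) B2))) B2) B2)"
  proof (rule eqv_psum[OF finite_qbasis], rule eqv_psum[OF finite_qbasis], rule eqv_psmult, rule eqv_mul_right)
    fix a b assume "a \<in> B2" "b \<in> B2"
    then show "eqv GL (psum (\<lambda>k. psmult (f k) (ug a k)) B2) (pconst (f a))"
      using f unfolding fixedv_def G_def by blast
    show "psum (\<lambda>l. psmult (g l) (ug b l)) B2 \<in> ncpoly (lett B2)" using \<open>b \<in> B2\<close> by (rule lin_ncpoly)
  qed
  also have "\<dots> = psum (\<lambda>a. psum (\<lambda>b. psmult (mc ns2 c a b * f a) (psum (\<lambda>l. psmult (g l) (ug b l)) B2)) B2) B2"
    by (simp add: pmul_pconst_left) (rule ext, simp add: pw mult.assoc)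
  also have "eqv GL \<dots> (psum (\<lambda>a. psum (\<lambda>b. psmult (mc ns2 c a b * f a) (pconst (g b))) B2) B2)"
  proof (rule eqv_psum[OF finite_qbasis], rule eqv_psum[OF finite_qbasis], rule eqv_psmult)
    fix a b assume "b \<in> B2"
    then show "eqv GL (psum (\<lambda>l. psmult (g l) (ug b l)) B2) (pconst (g b))"
      using g unfolding fixedv_def G_def by blast
  qed
  also have "\<dots> = pconst (\<Sum>k\<in>B2. \<Sum>l\<in>B2. mc ns2 c k l * f k * g l)"
    by (rule ext, case_tac "x = []") (simp_all add: pw pconst_app)
  finally show "eqv G (psum (\<lambda>j. psmult (\<Sum>k\<in>B2. \<Sum>l\<in>B2. mc ns2 j k l * f k * g l) (ug c j)) B2)
       (pconst (\<Sum>k\<in>B2. \<Sum>l\<in>B2. mc ns2 c k l * f k * g l))" by (simp add: G_def)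
qed

definition bv :: "(nat \<Rightarrow> complex) \<Rightarrow> idx \<Rightarrow> complex" where "bv \<alpha> k = \<alpha> (cpy k) * eta ns2 k"

lemma bv_unit:
  assumes c: "c \<in> B2" and b: "b \<in> B2"
  shows "(\<Sum>a\<in>B2. mc ns2 c a b * bv \<alpha> a) = \<alpha> (cpy c) * delta c b"
proof -
  have "(\<Sum>a\<in>B2. mc ns2 c a b * bv \<alpha> a) = (\<Sum>x\<in>B. mc ns2 c (sh (cpy c) x) b * bv \<alpha> (sh (cpy c) x))"
    using c by (intro sum_copy cpy_le) (auto simp: mc2)
  also have "\<dots> = (if cpy b = cpy c then \<alpha> (cpy c) * (\<Sum>x\<in>B. mc ns (red c) x (red b) * eta ns x) else 0)"
    using c by (auto simp: mc2 bv_def eta2 sh_in cpy_le sum_distrib_left mult_ac intro!: sum.cong)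
  also have "\<dots> = \<alpha> (cpy c) * delta c b"
  proof (cases "cpy b = cpy c")
    case True
    then have "delta (red c) (red b) = delta c b" unfolding delta_def by (metis sh_red)
    then show ?thesis using True unit_left[OF qs red_in[OF c] red_in[OF b]] by simp
  next
    case False
    then have "c \<noteq> b" by auto
    then show ?thesis using False by (simp add: delta_def)
  qed
  finally show ?thesis .
qed

lemma cross_gen:
  assumes f: "fixedv (bv \<alpha>)" and c: "c \<in> B2" and l: "l \<in> B2"
  shows "psmult (\<alpha> (cpy c) - \<alpha> (cpy l)) (ug c l) \<in> G"
proof -
  let ?f = "bv \<alpha>"
  let ?X = "psum (\<lambda>k. psmult (?f k) (psum (\<lambda>a. psum (\<lambda>b. psmult (mc ns2 c a b) (pmul (ug a k) (ug b l))) B2) B2)) B2"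
  let ?Y = "psum (\<lambda>k. psmult (?f k) (psum (\<lambda>d. psmult (mc ns2 d k l) (ug c d)) B2)) B2"
  have "psum (\<lambda>k. psmult (?f k) (pdiff (psum (\<lambda>a. psum (\<lambda>b. psmult (mc ns2 c a b) (pmul (ug a k) (ug b l))) B2) B2)
         (psum (\<lambda>d. psmult (mc ns2 d k l) (ug c d)) B2))) B2 \<in> GL"
    using c l rel_mult2 R2_G[unfolded G_def] by (intro gideal_psum gideal.smult) auto
  moreover have "psum (\<lambda>k. psmult (?f k) (pdiff (psum (\<lambda>a. psum (\<lambda>b. psmult (mc ns2 c a b) (pmul (ug a k) (ug b l))) B2) B2)
         (psum (\<lambda>d. psmult (mc ns2 d k l) (ug c d)) B2))) B2 = pdiff ?X ?Y"
    by (rule ext) (simp add: pw right_diff_distrib sum_subtractf)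
  ultimately have XY: "eqv GL ?X ?Y" by (simp add: eqv_def)
  have "?X = psum (\<lambda>a. psum (\<lambda>b. psmult (mc ns2 c a b) (pmul (psum (\<lambda>k. psmult (?f k) (ug a k)) B2) (ug b l))) B2) B2"
    by (simp only: pmul_psum_left pmul_psmult_left) (rule ext, unfold pw, rule id4)
  also have "eqv GL \<dots> (psum (\<lambda>a. psum (\<lambda>b. psmult (mc ns2 c a b) (pmul (pconst (?f a)) (ug b l))) B2) B2)"
  proof (rule eqv_psum[OF finite_qbasis], rule eqv_psum[OF finite_qbasis], rule eqv_psmult, rule eqv_mul_right)
    fix a b assume "a \<in> B2" "b \<in> B2"
    then show "eqv GL (psum (\<lambda>k. psmult (?f k) (ug a k)) B2) (pconst (?f a))"
      using f unfolding fixedv_def G_def by blast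
    show "ug b l \<in> ncpoly (lett B2)" using \<open>b \<in> B2\<close> l by (rule ug_ncpoly)
  qed
  also have "\<dots> = psum (\<lambda>b. psmult (\<Sum>a\<in>B2. mc ns2 c a b * ?f a) (ug b l)) B2"
    by (simp only: pmul_pconst_left) (rule ext, unfold pw, rule id5)
  also have "\<dots> = psum (\<lambda>b. psmult (\<alpha> (cpy c) * delta c b) (ug b l)) B2"
    using c by (intro ext) (simp add: pw bv_unit)
  also have "\<dots> = psmult (\<alpha> (cpy c)) (ug c l)"
    using c by (intro ext) (simp add: pw delta_sum1 delta_sum2)
  finally have X: "eqv GL ?X (psmult (\<alpha> (cpy c)) (ug c l))" .
  have "?Y = psum (\<lambda>d. psmult (\<Sum>k\<in>B2. mc ns2 d k l * ?f k) (ug c d)) B2"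
    by (rule ext) (unfold pw, rule id6)
  also have "\<dots> = psum (\<lambda>d. psmult (\<alpha> (cpy d) * delta d l) (ug c d)) B2"
    using l by (intro ext sum.cong refl) (simp add: pw bv_unit)
  also have "\<dots> = psmult (\<alpha> (cpy l)) (ug c l)"
    using l by (intro ext) (simp add: pw delta_sum1 delta_sum2)
  finally have Y: "?Y = psmult (\<alpha> (cpy l)) (ug c l)" .
  have "eqv GL (psmult (\<alpha> (cpy c)) (ug c l)) (psmult (\<alpha> (cpy l)) (ug c l))"
    using eqv_eq_trans[OF eqv_trans[OF eqv_sym[OF X] XY] Y] .
  moreover have "pdiff (psmult (\<alpha> (cpy c)) (ug c l)) (psmult (\<alpha> (cpy l)) (ug c l)) = psmult (\<alpha> (cpy c) - \<alpha> (cpy l)) (ug c l)"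
    by (rule ext) (simp add: pw algebra_simps)
  ultimately show ?thesis by (simp add: eqv_def G_def)
qed

end


context cs begin

lemma sum_if_eq: "finite S \<Longrightarrow> a \<in> S \<Longrightarrow> (\<Sum>b\<in>S. if a = b then f b else (0::'z::comm_monoid_add)) = f a"
  by (simp add: sum.delta)

lemma Bi_le: "i \<in> B2 \<Longrightarrow> cpy i \<le> n" by (rule cpy_le)

lemma eta_sh: "x \<in> B \<Longrightarrow> b \<le> n \<Longrightarrow> eta ns2 (sh b x) = eta ns x"
  by (simp add: eta2 sh_in)

lemma idm_eta: "y \<in> B \<Longrightarrow> (\<Sum>x\<in>B. idm y x * (c * eta ns x)) = c * eta ns y"
  by (simp add: idm_def if_distrib[where f = "\<lambda>x. x * _"] cong: if_cong)

lemma As_eta: "a \<in> {1..n} \<Longrightarrow> y \<in> B \<Longrightarrow> (\<Sum>x\<in>B. As a y x * (c * eta ns x)) = c * (complex_of_real (dg a) * eta ns y)"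
proof -
  assume a: "a \<in> {1..n}" and y: "y \<in> B"
  have "(\<Sum>x\<in>B. As a y x * (c * eta ns x)) = c * (\<Sum>x\<in>B. As a y x * eta ns x)"
    by (simp add: sum_distrib_left mult_ac)
  also have "\<dots> = c * (complex_of_real (dg a) * eta ns y)"
    using dreg[OF a] y by (simp add: dregular_def)
  finally show ?thesis .
qed

lemma bv_A:
  assumes i: "i \<in> B2"
  shows "(\<Sum>e\<in>B2. Ap i e * bv \<alpha> e) = bv (\<lambda>a. (if 1 \<le> a then complex_of_real (dg a) * \<alpha> a else 0) + (if 1 \<le> a then \<alpha> (a - 1) else 0)) i"
proof -
  let ?a = "cpy i" and ?y = "red i"
  have an: "?a \<le> n" and y: "?y \<in> B" using i by (auto simp: cpy_le red_in)
  have "(\<Sum>e\<in>B2. Ap i e * bv \<alpha> e) = (\<Sum>b\<le>n. \<Sum>x\<in>B. Blk ?a b ?y x * (\<alpha> b * eta ns x))"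
    unfolding sum_B2 by (intro sum.cong refl) (simp add: Ap_def bv_def eta_sh)
  also have "\<dots> = (\<Sum>b\<le>n. (if ?a = b \<and> 1 \<le> ?a then \<alpha> b * (complex_of_real (dg ?a) * eta ns ?y) else 0)
                  + (if ?a = Suc b then \<alpha> b * eta ns ?y else 0))"
  proof (intro sum.cong refl)
    fix b assume "b \<in> {..n}"
    have "(\<Sum>x\<in>B. Blk ?a b ?y x * (\<alpha> b * eta ns x)) =
        (\<Sum>x\<in>B. (if ?a = b \<and> 1 \<le> ?a then As ?a ?y x else 0) * (\<alpha> b * eta ns x))
      + (\<Sum>x\<in>B. (if ?a = Suc b then idm ?y x else 0) * (\<alpha> b * eta ns x))"
      unfolding Blk_def by (simp add: distrib_right sum.distrib)
    also have "\<dots> = (if ?a = b \<and> 1 \<le> ?a then \<alpha> b * (complex_of_real (dg ?a) * eta ns ?y) else 0)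
                  + (if ?a = Suc b then \<alpha> b * eta ns ?y else 0)"
    proof (cases "?a = b \<and> 1 \<le> ?a")
      case True
      then have "?a \<in> {1..n}" "?a \<noteq> Suc b" using an by auto
      then show ?thesis using True y by (simp add: As_eta)
    next
      case F: False
      show ?thesis
      proof (cases "?a = Suc b")
        case True
        show ?thesis by (simp only: if_not_P[OF F] if_P[OF True]) (simp add: idm_eta y)
      next
        case False
        show ?thesis by (simp only: if_not_P[OF F] if_not_P[OF False]) simp
      qed
    qed
    finally show "(\<Sum>x\<in>B. Blk ?a b ?y x * (\<alpha> b * eta ns x)) = \<dots>" .
  qed
  also have "\<dots> = (if 1 \<le> ?a then \<alpha> ?a * (complex_of_real (dg ?a) * eta ns ?y) else 0)
                  + (if 1 \<le> ?a then \<alpha> (?a - 1) * eta ns ?y else 0)"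
  proof -
    have "(\<Sum>b\<le>n. (if ?a = b \<and> 1 \<le> ?a then \<alpha> b * (complex_of_real (dg ?a) * eta ns ?y) else 0))
        = (if 1 \<le> ?a then \<alpha> ?a * (complex_of_real (dg ?a) * eta ns ?y) else 0)"
    proof (cases "1 \<le> ?a")
      case True
      have "(\<Sum>b\<le>n. (if ?a = b \<and> 1 \<le> ?a then \<alpha> b * (complex_of_real (dg ?a) * eta ns ?y) else 0))
         = (\<Sum>b\<le>n. (if ?a = b then \<alpha> b * (complex_of_real (dg ?a) * eta ns ?y) else 0))"
        using True by (intro sum.cong refl) simp
      also have "\<dots> = \<alpha> ?a * (complex_of_real (dg ?a) * eta ns ?y)"
        using an by (simp only: sum_if_eq finite_atMost atMost_iff)
      finally show ?thesis using True by simp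
    next
      case False
      then show ?thesis by simp
    qed
    moreover have "(\<Sum>b\<le>n. (if ?a = Suc b then \<alpha> b * eta ns ?y else 0))
        = (if 1 \<le> ?a then \<alpha> (?a - 1) * eta ns ?y else 0)"
    proof (cases "1 \<le> ?a")
      case True
      have "(\<Sum>b\<le>n. (if ?a = Suc b then \<alpha> b * eta ns ?y else 0))
         = (\<Sum>b\<le>n. (if ?a - 1 = b then \<alpha> b * eta ns ?y else 0))"
        using True by (intro sum.cong refl) auto
      also have "\<dots> = \<alpha> (?a - 1) * eta ns ?y"
        using an True by (subst sum_if_eq) auto
      finally show ?thesis using True by simp
    next
      case False
      then show ?thesis by simp
    qed
    ultimately show ?thesis by (simp only: sum.distrib)
  qed
  also have "\<dots> = bv (\<lambda>a. (if 1 \<le> a then complex_of_real (dg a) * \<alpha> a else 0) + (if 1 \<le> a then \<alpha> (a - 1) else 0)) i"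
    unfolding bv_def eta2[OF i] by (cases "1 \<le> cpy i") (simp_all add: algebra_simps)
  finally show ?thesis .
qed

lemma bv_mul:
  assumes c: "c \<in> B2"
  shows "(\<Sum>k\<in>B2. \<Sum>l\<in>B2. mc ns2 c k l * bv \<alpha> k * bv \<beta> l) = bv (\<lambda>a. \<alpha> a * \<beta> a) c"
proof -
  have an: "cpy c \<le> n" and y: "red c \<in> B" using c by (auto simp: cpy_le red_in)
  have "(\<Sum>k\<in>B2. \<Sum>l\<in>B2. mc ns2 c k l * bv \<alpha> k * bv \<beta> l) = (\<Sum>k\<in>B2. \<Sum>l\<in>B2. mc ns2 c k l * (bv \<alpha> k * bv \<beta> l))"
    by (simp add: mult.assoc)
  also have "\<dots> = (\<Sum>x\<in>B. \<Sum>y\<in>B. mc ns (red c) x y * (bv \<alpha> (sh (cpy c) x) * bv \<beta> (sh (cpy c) y)))"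
    by (rule sum2_left[OF c])
  also have "\<dots> = (\<Sum>x\<in>B. \<Sum>y\<in>B. (\<alpha> (cpy c) * \<beta> (cpy c)) * (mc ns (red c) x y * eta ns x * eta ns y))"
    using an by (intro sum.cong refl) (simp add: bv_def eta_sh mult_ac)
  also have "\<dots> = (\<alpha> (cpy c) * \<beta> (cpy c)) * eta ns (red c)"
    using unit_both[OF qs y] by (simp add: sum_distrib_left[symmetric])
  also have "\<dots> = bv (\<lambda>a. \<alpha> a * \<beta> a) c" using c by (simp add: bv_def eta2)
  finally show ?thesis .
qed

lemma fixed_bv_one: "fixedv (bv (\<lambda>_. 1))"
  by (rule fixed_cong[OF fixed_eta]) (simp add: bv_def)

lemma fixed_bv_lin: "fixedv (bv \<alpha>) \<Longrightarrow> fixedv (bv \<beta>) \<Longrightarrow> fixedv (bv (\<lambda>a. x * \<alpha> a + y * \<beta> a))"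
  by (rule fixed_cong[OF fixed_lin[of "bv \<alpha>" "bv \<beta>" x y]]) (auto simp: bv_def algebra_simps)

lemma fixed_bv_mul: "fixedv (bv \<alpha>) \<Longrightarrow> fixedv (bv \<beta>) \<Longrightarrow> fixedv (bv (\<lambda>a. \<alpha> a * \<beta> a))"
  by (rule fixed_cong[OF fixed_mul[of "bv \<alpha>" "bv \<beta>"]]) (auto simp: bv_mul)

lemma fixed_bv_A: "fixedv (bv \<alpha>) \<Longrightarrow>
   fixedv (bv (\<lambda>a. (if 1 \<le> a then complex_of_real (dg a) * \<alpha> a else 0) + (if 1 \<le> a then \<alpha> (a - 1) else 0)))"
  by (rule fixed_cong[OF fixed_A]) (auto simp: bv_A)

lemma fixed_bv_cong: "fixedv (bv \<alpha>) \<Longrightarrow> (\<And>a. a \<le> n \<Longrightarrow> \<alpha> a = \<beta> a) \<Longrightarrow> fixedv (bv \<beta>)"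
proof -
  assume f: "fixedv (bv \<alpha>)" and h: "\<And>a. a \<le> n \<Longrightarrow> \<alpha> a = \<beta> a"
  show ?thesis by (rule fixed_cong[OF f]) (simp add: bv_def h cpy_le)
qed

definition gam :: "nat \<Rightarrow> complex" where
  "gam a = (if 1 \<le> a then complex_of_real (dg a) + 1 else 0)"

lemma fixed_gam: "fixedv (bv gam)"
  by (rule fixed_bv_cong[OF fixed_bv_A[OF fixed_bv_one]]) (simp add: gam_def)

lemma fixed_lag: "fixedv (bv (\<lambda>b. \<Prod>a\<in>{1..m}. (gam b - (complex_of_real (dg a) + 1))))"
proof (induction m)
  case 0
  then show ?case using fixed_bv_one by simp
next
  case (Suc m)
  have "fixedv (bv (\<lambda>b. 1 * gam b + (- (complex_of_real (dg (Suc m)) + 1)) * 1))"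
    by (rule fixed_bv_lin[OF fixed_gam fixed_bv_one])
  then have "fixedv (bv (\<lambda>b. (\<Prod>a\<in>{1..m}. (gam b - (complex_of_real (dg a) + 1))) *
      (1 * gam b + (- (complex_of_real (dg (Suc m)) + 1)) * 1)))"
    by (rule fixed_bv_mul[OF Suc.IH])
  then show ?case by (rule fixed_bv_cong) (simp add: prod.nat_ivl_Suc')
qed

lemma dg_nonneg: "a \<in> {1..n} \<Longrightarrow> 0 \<le> dg a"
  using degree_nonneg[OF qs gr dreg] by blast

lemma fixed_E0: "fixedv (bv (\<lambda>b. if b = 0 then 1 else 0))"
proof -
  define P where "P = (\<Prod>a\<in>{1..n}. (gam 0 - (complex_of_real (dg a) + 1)))"
  have P0: "P \<noteq> 0"
  proof -
    have "gam 0 - (complex_of_real (dg a) + 1) \<noteq> 0" if "a \<in> {1..n}" for a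
    proof
      assume h: "gam 0 - (complex_of_real (dg a) + 1) = 0"
      have "Re (gam 0 - (complex_of_real (dg a) + 1)) = 0" using h by simp
      then have "dg a = -1" by (simp add: gam_def)
      then show False using dg_nonneg[OF that] by simp
    qed
    then show ?thesis unfolding P_def by (simp add: prod_zero_iff)
  qed
  have "fixedv (bv (\<lambda>b. (1 / P) * (\<Prod>a\<in>{1..n}. (gam b - (complex_of_real (dg a) + 1))) + 0 * 1))"
    by (rule fixed_bv_lin[OF fixed_lag fixed_bv_one])
  then show ?thesis
  proof (rule fixed_bv_cong)
    fix b assume b: "b \<le> n"
    show "(1 / P) * (\<Prod>a\<in>{1..n}. (gam b - (complex_of_real (dg a) + 1))) + 0 * 1 = (if b = 0 then 1 else 0)"
    proof (cases "b = 0")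
      case True
      then show ?thesis using P0 by (simp add: P_def)
    next
      case False
      then have "b \<in> {1..n}" using b by auto
      moreover have "gam b - (complex_of_real (dg b) + 1) = 0" using False by (simp add: gam_def)
      ultimately have "(\<Prod>a\<in>{1..n}. (gam b - (complex_of_real (dg a) + 1))) = 0"
        by (intro prod_zero) auto
      then show ?thesis using False by simp
    qed
  qed
qed

lemma fixed_E: "fixedv (bv (\<lambda>b. if b = a then 1 else 0))"
proof (induction a)
  case 0
  then show ?case using fixed_E0 by simp
next
  case (Suc a)
  let ?E = "\<lambda>b. if b = a then (1::complex) else 0"
  have "fixedv (bv (\<lambda>b. 1 * ((if 1 \<le> b then complex_of_real (dg b) * ?E b else 0) + (if 1 \<le> b then ?E (b - 1) else 0))
      + (- (if 1 \<le> a then complex_of_real (dg a) else 0)) * ?E b))"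
    by (rule fixed_bv_lin[OF fixed_bv_A[OF Suc.IH] Suc.IH])
  then show ?case
  proof (rule fixed_bv_cong)
    fix b :: nat
    show "1 * ((if 1 \<le> b then complex_of_real (dg b) * ?E b else 0) + (if 1 \<le> b then ?E (b - 1) else 0))
      + (- (if 1 \<le> a then complex_of_real (dg a) else 0)) * ?E b = (if b = Suc a then 1 else 0)"
    proof (cases "b = 0")
      case True then show ?thesis by simp
    next
      case b0: False
      show ?thesis
      proof (cases "b = a")
        case True then show ?thesis using b0 by simp
      next
        case False
        then show ?thesis using b0 by auto
      qed
    qed
  qed
qed

lemma cross_zero: "c \<in> B2 \<Longrightarrow> l \<in> B2 \<Longrightarrow> cpy c \<noteq> cpy l \<Longrightarrow> ug c l \<in> G"
proof -
  assume c: "c \<in> B2" and l: "l \<in> B2" and d: "cpy c \<noteq> cpy l"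
  have "psmult 1 (ug c l) \<in> G" using cross_gen[OF fixed_E[of "cpy c"] c l] d by simp
  moreover have "psmult 1 (ug c l) = ug c l" by (rule ext) (simp add: pw)
  ultimately show ?thesis by simp
qed

end


context cs begin

lemma psum_cong: "(\<And>x. x \<in> S \<Longrightarrow> f x = g x) \<Longrightarrow> psum f S = psum g S"
  by (rule ext) (simp add: pw)

lemma G_psmult: "p \<in> G \<Longrightarrow> psmult c p \<in> G" unfolding G_def by (rule gideal.smult)

lemma eqv_pzero_G: "p \<in> G \<Longrightarrow> eqv GL p pzero"
  using eqv_zero_iff[of G p] by (simp add: G_def)

lemma drop_row:
  assumes i: "i \<in> B2"
  shows "eqv GL (psum (\<lambda>k. psmult (C k) (ug i k)) B2) (psum (\<lambda>z. psmult (C (sh (cpy i) z)) (ug i (sh (cpy i) z))) B)"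
proof -
  have "eqv GL (psum (\<lambda>k. psmult (C k) (ug i k)) B2) (psum (\<lambda>k. if cpy k = cpy i then psmult (C k) (ug i k) else pzero) B2)"
  proof (rule eqv_psum[OF finite_qbasis])
    fix k assume k: "k \<in> B2"
    show "eqv GL (psmult (C k) (ug i k)) (if cpy k = cpy i then psmult (C k) (ug i k) else pzero)"
    proof (cases "cpy k = cpy i")
      case True then show ?thesis by (simp add: eqv_refl)
    next
      case False then show ?thesis using cross_zero[OF i k] by (simp add: eqv_pzero_G G_psmult)
    qed
  qed
  also have "psum (\<lambda>k. if cpy k = cpy i then psmult (C k) (ug i k) else pzero) B2
      = psum (\<lambda>z. psmult (C (sh (cpy i) z)) (ug i (sh (cpy i) z))) B"
    using i by (subst psum_copy[where a = "cpy i"]) (auto simp: cpy_le intro!: psum_cong)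
  finally show ?thesis .
qed

lemma drop_col:
  assumes j: "j \<in> B2"
  shows "eqv GL (psum (\<lambda>k. psmult (C k) (ug k j)) B2) (psum (\<lambda>z. psmult (C (sh (cpy j) z)) (ug (sh (cpy j) z) j)) B)"
proof -
  have "eqv GL (psum (\<lambda>k. psmult (C k) (ug k j)) B2) (psum (\<lambda>k. if cpy k = cpy j then psmult (C k) (ug k j) else pzero) B2)"
  proof (rule eqv_psum[OF finite_qbasis])
    fix k assume k: "k \<in> B2"
    show "eqv GL (psmult (C k) (ug k j)) (if cpy k = cpy j then psmult (C k) (ug k j) else pzero)"
    proof (cases "cpy k = cpy j")
      case True then show ?thesis by (simp add: eqv_refl)
    next
      case False then show ?thesis using cross_zero[OF k j] by (simp add: eqv_pzero_G G_psmult)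
    qed
  qed
  also have "psum (\<lambda>k. if cpy k = cpy j then psmult (C k) (ug k j) else pzero) B2
      = psum (\<lambda>z. psmult (C (sh (cpy j) z)) (ug (sh (cpy j) z) j)) B"
    using j by (subst psum_copy[where a = "cpy j"]) (auto simp: cpy_le intro!: psum_cong)
  finally show ?thesis .
qed

lemma psum_idm1: "y \<in> B \<Longrightarrow> psum (\<lambda>z. psmult (idm z y) (F z)) B = F y"
  by (rule ext) (simp add: pw idm_def if_distrib[where f = "\<lambda>x. x * _"] cong: if_cong)

lemma psum_idm2: "x \<in> B \<Longrightarrow> psum (\<lambda>z. psmult (idm x z) (F z)) B = F x"
  by (rule ext) (simp add: pw idm_def if_distrib[where f = "\<lambda>x. x * _"] cong: if_cong)

lemma Ap_sh: "x \<in> B \<Longrightarrow> y \<in> B \<Longrightarrow> Ap (sh a x) (sh b y) = Blk a b x y"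
  by (simp add: Ap_def)

lemma chain_step:
  assumes a: "a \<in> {1..n}" and x: "x \<in> B" and y: "y \<in> B"
  shows "eqv GL (ug (sh a x) (sh a y)) (ug (sh (a - 1) x) (sh (a - 1) y))"
proof -
  let ?i = "sh a x" and ?j = "sh (a - 1) y"
  have i: "?i \<in> B2" and j: "?j \<in> B2" using a x y by (auto intro: sh_in)
  have blk: "Blk a (a - 1) u v = idm u v" "Blk a (a - Suc 0) u v = idm u v" for u v using a by (auto simp: Blk_def)
  have "psum (\<lambda>z. psmult (Ap (sh a z) ?j) (ug ?i (sh a z))) B = psum (\<lambda>z. psmult (idm z y) (ug ?i (sh a z))) B"
    using y by (intro psum_cong) (simp add: Ap_sh blk)
  then have "ug ?i (sh a y) = psum (\<lambda>z. psmult (Ap (sh a z) ?j) (ug ?i (sh a z))) B"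
    using y by (simp add: psum_idm1)
  also have "eqv GL (psum (\<lambda>k. psmult (Ap k ?j) (ug ?i k)) B2) \<dots>"
    using drop_row[OF i, of "\<lambda>k. Ap k ?j"] x by simp
  ultimately have l1: "eqv GL (psum (\<lambda>k. psmult (Ap k ?j) (ug ?i k)) B2) (ug ?i (sh a y))" by simp
  have "psum (\<lambda>z. psmult (Ap ?i (sh (a - 1) z)) (ug (sh (a - 1) z) ?j)) B = psum (\<lambda>z. psmult (idm x z) (ug (sh (a - 1) z) ?j)) B"
    using x by (intro psum_cong) (simp add: Ap_sh blk)
  then have "ug (sh (a - 1) x) ?j = psum (\<lambda>z. psmult (Ap ?i (sh (a - 1) z)) (ug (sh (a - 1) z) ?j)) B"
    using x by (simp add: psum_idm2)
  moreover have "eqv GL (psum (\<lambda>k. psmult (Ap ?i k) (ug k ?j)) B2) (psum (\<lambda>z. psmult (Ap ?i (sh (a - 1) z)) (ug (sh (a - 1) z) ?j)) B)"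
    using drop_col[OF j, of "\<lambda>k. Ap ?i k"] y by simp
  ultimately have l2: "eqv GL (psum (\<lambda>k. psmult (Ap ?i k) (ug k ?j)) B2) (ug (sh (a - 1) x) ?j)" by simp
  have r: "eqv GL (psum (\<lambda>k. psmult (Ap k ?j) (ug ?i k)) B2) (psum (\<lambda>k. psmult (Ap ?i k) (ug k ?j)) B2)"
    using eqv_R2[OF rel_graph2[OF i j]] by (simp add: G_def)
  show ?thesis using eqv_trans[OF eqv_trans[OF eqv_sym[OF l1] r] l2] .
qed

lemma chain: "a \<le> n \<Longrightarrow> x \<in> B \<Longrightarrow> y \<in> B \<Longrightarrow> eqv GL (ug (sh a x) (sh a y)) (ug x y)"
proof (induction a)
  case 0 then show ?case by (simp add: eqv_refl)
next
  case (Suc a)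
  have "eqv GL (ug (sh (Suc a) x) (sh (Suc a) y)) (ug (sh a x) (sh a y))"
    using chain_step[of "Suc a" x y] Suc.prems by simp
  moreover have "eqv GL (ug (sh a x) (sh a y)) (ug x y)" using Suc.IH Suc.prems by simp
  ultimately show ?case by (rule eqv_trans)
qed

end


lemma psmult_zero_pzero: "psmult 0 p = pzero" by (rule ext) (simp add: pw)
lemma psum_pzero: "psum (\<lambda>_. pzero) S = pzero" by (rule ext) (simp add: pw)

context cs begin

lemma B_sub_B2: "B \<subseteq> B2" using B_sub by blast

lemma notB_cpy: "k \<in> B2 \<Longrightarrow> k \<notin> B \<Longrightarrow> cpy k \<noteq> 0"
  by (metis red_in sh0 sh_red)

lemma sub_helper:
  assumes f: "\<And>k. k \<in> B2 - B \<Longrightarrow> f k \<in> G" and r: "pdiff (psum f B2) c \<in> G"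
  shows "pdiff (psum f B) c \<in> G"
proof -
  have X: "psum f (B2 - B) \<in> G" using f unfolding G_def by (intro gideal_psum) auto
  have "pdiff (psum f B) c = pdiff (pdiff (psum f B2) c) (psum f (B2 - B))"
  proof (rule ext)
    fix w
    have "(\<Sum>k\<in>B2. f k w) = (\<Sum>k\<in>B. f k w) + (\<Sum>k\<in>B2 - B. f k w)"
      using B_sub_B2 by (simp add: sum.subset_diff)
    then show "pdiff (psum f B) c w = pdiff (pdiff (psum f B2) c) (psum f (B2 - B)) w" by (simp add: pw)
  qed
  then show ?thesis using r X unfolding G_def by (simp add: gideal_pdiff)
qed

lemma mc2_B: "c \<in> B \<Longrightarrow> a \<in> B \<Longrightarrow> b \<in> B \<Longrightarrow> mc ns2 c a b = mc ns c a b"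
  by (simp add: mc2 B_sub cpy_B red_B)

lemma mult_rel_eq:
  assumes c: "c \<in> B" and k: "k \<in> B" and l: "l \<in> B"
  shows "pdiff (psum (\<lambda>a. psum (\<lambda>b. psmult (mc ns2 c a b) (pmul (ug a k) (ug b l))) B2) B2)
         (psum (\<lambda>d. psmult (mc ns2 d k l) (ug c d)) B2)
       = pdiff (psum (\<lambda>a. psum (\<lambda>b. psmult (mc ns c a b) (pmul (ug a k) (ug b l))) B) B)
         (psum (\<lambda>d. psmult (mc ns d k l) (ug c d)) B)"
proof -
  have c2: "c \<in> B2" using c by (rule B_sub)
  have inner: "psum (\<lambda>b. psmult (mc ns2 c a b) (pmul (ug a k) (ug b l))) B2
     = psum (\<lambda>b. psmult (mc ns c a b) (pmul (ug a k) (ug b l))) B" if a: "a \<in> B" for a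
  proof -
    have "psum (\<lambda>b. psmult (mc ns2 c a b) (pmul (ug a k) (ug b l))) B2
       = psum (\<lambda>b. psmult (mc ns2 c a (sh 0 b)) (pmul (ug a k) (ug (sh 0 b) l))) B"
      by (rule psum_copy) (auto simp: mc2[OF c2] cpy_B[OF c] psmult_zero_pzero)
    also have "\<dots> = psum (\<lambda>b. psmult (mc ns c a b) (pmul (ug a k) (ug b l))) B"
      using a c by (intro psum_cong) (simp add: mc2_B)
    finally show ?thesis .
  qed
  have "psum (\<lambda>a. psum (\<lambda>b. psmult (mc ns2 c a b) (pmul (ug a k) (ug b l))) B2) B2
      = psum (\<lambda>a. psum (\<lambda>b. psmult (mc ns2 c (sh 0 a) b) (pmul (ug (sh 0 a) k) (ug b l))) B2) B"
    by (rule psum_copy) (auto simp: mc2[OF c2] cpy_B[OF c] psmult_zero_pzero psum_pzero)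
  also have "\<dots> = psum (\<lambda>a. psum (\<lambda>b. psmult (mc ns c a b) (pmul (ug a k) (ug b l))) B) B"
    by (intro psum_cong) (simp add: inner)
  finally have e1: "psum (\<lambda>a. psum (\<lambda>b. psmult (mc ns2 c a b) (pmul (ug a k) (ug b l))) B2) B2
     = psum (\<lambda>a. psum (\<lambda>b. psmult (mc ns c a b) (pmul (ug a k) (ug b l))) B) B" .
  have "psum (\<lambda>d. psmult (mc ns2 d k l) (ug c d)) B2 = psum (\<lambda>d. psmult (mc ns2 (sh 0 d) k l) (ug c (sh 0 d))) B"
    by (rule psum_copy) (auto simp: mc2 cpy_B[OF k] psmult_zero_pzero)
  also have "\<dots> = psum (\<lambda>d. psmult (mc ns d k l) (ug c d)) B"
    using k l by (intro psum_cong) (simp add: mc2_B)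
  finally show ?thesis using e1 by simp
qed

lemma S_in_G:
  assumes s: "s \<in> qut_rel ns (As ` {1..n})"
  shows "s \<in> G"
proof -
  have ugsB: "i \<in> B2 \<Longrightarrow> j \<in> B2 \<Longrightarrow> ugs i j \<in> ncpoly (lett B2)" for i j by (rule ugs_ncpoly)
  from s consider (q) "s \<in> rel_qset ns" | (g) a where "a \<in> {1..n}" "s \<in> rel_graph ns (As a)"
    unfolding qut_rel_def by blast
  then show ?thesis
  proof cases
    case q
    then consider
        (u1) i j where "i \<in> B" "j \<in> B" "s = pdiff (psum (\<lambda>k. pmul (ug i k) (ugs j k)) B) (pconst (delta i j))"
      | (u2) i j where "i \<in> B" "j \<in> B" "s = pdiff (psum (\<lambda>k. pmul (ugs k i) (ug k j)) B) (pconst (delta i j))"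
      | (m) c k l where "c \<in> B" "k \<in> B" "l \<in> B" "s = pdiff (psum (\<lambda>a. psum (\<lambda>b. psmult (mc ns c a b) (pmul (ug a k) (ug b l))) B) B)
            (psum (\<lambda>d. psmult (mc ns d k l) (ug c d)) B)"
      | (e) i where "i \<in> B" "s = pdiff (psum (\<lambda>j. psmult (eta ns j) (ug i j)) B) (pconst (eta ns i))"
      unfolding rel_qset_def Un_iff mem_Collect_eq by (elim disjE exE conjE) (assumption | rule that; assumption)+
    then show ?thesis
    proof cases
      case u1
      have i2: "i \<in> B2" and j2: "j \<in> B2" using u1 by (auto intro: B_sub)
      have r: "pdiff (psum (\<lambda>k. pmul (ug i k) (ugs j k)) B2) (pconst (delta i j)) \<in> G"
        using i2 j2 by (intro R2_G) (unfold R2_def qut_rel_def rel_qset_def, rule UnI1, rule UnI1, rule UnI1, rule UnI1, blast)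
      show ?thesis unfolding u1
      proof (rule sub_helper[OF _ r])
        fix k assume k: "k \<in> B2 - B"
        then have "ug i k \<in> G" using u1 by (intro cross_zero) (auto simp: B_sub cpy_B notB_cpy)
        then show "pmul (ug i k) (ugs j k) \<in> G" unfolding G_def using k j2 by (intro gideal_mul_right ugsB) auto
      qed
    next
      case u2
      have i2: "i \<in> B2" and j2: "j \<in> B2" using u2 by (auto intro: B_sub)
      have r: "pdiff (psum (\<lambda>k. pmul (ugs k i) (ug k j)) B2) (pconst (delta i j)) \<in> G"
        using i2 j2 by (intro R2_G) (unfold R2_def qut_rel_def rel_qset_def, rule UnI1, rule UnI1, rule UnI1, rule UnI2, blast)
      show ?thesis unfolding u2
      proof (rule sub_helper[OF _ r])
        fix k assume k: "k \<in> B2 - B"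
        then have "ug k j \<in> G" using u2 by (intro cross_zero) (auto simp: B_sub cpy_B notB_cpy)
        then show "pmul (ugs k i) (ug k j) \<in> G" unfolding G_def using k i2 by (intro gideal_mul_left ugsB) auto
      qed
    next
      case m
      have "s \<in> R2" using m unfolding mult_rel_eq[OF m(1-3), symmetric]
        using rel_mult2[of c k l] by (auto intro: B_sub)
      then show ?thesis by (rule R2_G)
    next
      case e
      have i2: "i \<in> B2" using e by (auto intro: B_sub)
      have r: "pdiff (psum (\<lambda>j. psmult (eta ns2 j) (ug i j)) B2) (pconst (eta ns i)) \<in> G"
        using rel_unit2[OF i2] e by (simp add: R2_G eta2 B_sub red_B)
      have "pdiff (psum (\<lambda>j. psmult (eta ns2 j) (ug i j)) B) (pconst (eta ns i)) \<in> G"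
      proof (rule sub_helper[OF _ r])
        fix k assume k: "k \<in> B2 - B"
        then have "ug i k \<in> G" using e by (intro cross_zero) (auto simp: B_sub cpy_B notB_cpy)
        then show "psmult (eta ns2 k) (ug i k) \<in> G" by (rule G_psmult)
      qed
      moreover have "psum (\<lambda>j. psmult (eta ns2 j) (ug i j)) B = psum (\<lambda>j. psmult (eta ns j) (ug i j)) B"
        by (intro psum_cong) (simp add: eta2 B_sub red_B)
      ultimately show ?thesis using e by simp
    qed
  next
    case g
    then obtain i j where ij: "i \<in> B" "j \<in> B"
      and s_eq: "s = pdiff (psum (\<lambda>k. psmult (As a k j) (ug i k)) B) (psum (\<lambda>k. psmult (As a i k) (ug k j)) B)"
      unfolding rel_graph_def by blast
    have a: "a \<in> {1..n}" and an: "a \<le> n" using g by auto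
    let ?i = "sh a i" and ?j = "sh a j"
    have i2: "?i \<in> B2" and j2: "?j \<in> B2" using ij an by (auto intro: sh_in)
    have blk: "Blk a a u v = As a u v" for u v using a by (auto simp: Blk_def)
    have r: "eqv GL (psum (\<lambda>k. psmult (Ap k ?j) (ug ?i k)) B2) (psum (\<lambda>k. psmult (Ap ?i k) (ug k ?j)) B2)"
      using eqv_R2[OF rel_graph2[OF i2 j2]] by (simp add: G_def)
    have "eqv GL (psum (\<lambda>k. psmult (Ap k ?j) (ug ?i k)) B2) (psum (\<lambda>z. psmult (Ap (sh a z) ?j) (ug ?i (sh a z))) B)"
      using drop_row[OF i2, of "\<lambda>k. Ap k ?j"] ij by simp
    also have "psum (\<lambda>z. psmult (Ap (sh a z) ?j) (ug ?i (sh a z))) B = psum (\<lambda>z. psmult (As a z j) (ug ?i (sh a z))) B"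
      using ij by (intro psum_cong) (simp add: Ap_sh blk)
    also have "eqv GL \<dots> (psum (\<lambda>z. psmult (As a z j) (ug i z)) B)"
      using ij an by (intro eqv_psum[OF finite_qbasis] eqv_psmult chain) auto
    finally have l1: "eqv GL (psum (\<lambda>k. psmult (Ap k ?j) (ug ?i k)) B2) (psum (\<lambda>z. psmult (As a z j) (ug i z)) B)" .
    have "eqv GL (psum (\<lambda>k. psmult (Ap ?i k) (ug k ?j)) B2) (psum (\<lambda>z. psmult (Ap ?i (sh a z)) (ug (sh a z) ?j)) B)"
      using drop_col[OF j2, of "\<lambda>k. Ap ?i k"] ij by simp
    also have "psum (\<lambda>z. psmult (Ap ?i (sh a z)) (ug (sh a z) ?j)) B = psum (\<lambda>z. psmult (As a i z) (ug (sh a z) ?j)) B"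
      using ij by (intro psum_cong) (simp add: Ap_sh blk)
    also have "eqv GL \<dots> (psum (\<lambda>z. psmult (As a i z) (ug z j)) B)"
      using ij an by (intro eqv_psum[OF finite_qbasis] eqv_psmult chain) auto
    finally have l2: "eqv GL (psum (\<lambda>k. psmult (Ap ?i k) (ug k ?j)) B2) (psum (\<lambda>z. psmult (As a i z) (ug z j)) B)" .
    have "eqv GL (psum (\<lambda>z. psmult (As a z j) (ug i z)) B) (psum (\<lambda>z. psmult (As a i z) (ug z j)) B)"
      using eqv_trans[OF eqv_trans[OF eqv_sym[OF l1] r] l2] .
    then show ?thesis unfolding s_eq eqv_def G_def .
  qed
qed

definition q :: "idx \<times> idx \<Rightarrow> letter ncp" where
  "q p = (if cpy (fst p) = cpy (snd p) then ug (red (fst p)) (red (snd p)) else pzero)"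

lemma q_back:
  assumes i: "i \<in> B2" and j: "j \<in> B2"
  shows "pdiff (q (i, j)) (ug i j) \<in> G"
proof (cases "cpy i = cpy j")
  case True
  have "eqv GL (ug (sh (cpy i) (red i)) (sh (cpy i) (red j))) (ug (red i) (red j))"
    using i j by (intro chain) (auto simp: cpy_le red_in)
  moreover have "sh (cpy i) (red i) = i" "sh (cpy i) (red j) = j" using True sh_red[of i] sh_red[of j] by simp_all
  ultimately have "eqv GL (ug (red i) (red j)) (ug i j)" by (simp add: eqv_sym)
  then show ?thesis using True by (simp add: q_def eqv_def G_def)
next
  case False
  have "psmult (-1) (ug i j) \<in> G" using cross_zero[OF i j False] by (rule G_psmult)
  moreover have "psmult (-1) (ug i j) = pdiff pzero (ug i j)" by (rule ext) (simp add: pw)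
  ultimately show ?thesis using False by (simp add: q_def)
qed

end


lemma IS_zero: "pzero \<in> starideal fl L R" unfolding starideal_def by (rule gideal.zero)

lemma pconst_zero: "pconst 0 = pzero" by (rule ext) (simp add: pconst_app pw)

lemma fs_ug[simp]: "finite (supp (ug i j))" by (simp add: ug_mono)
lemma fs_ugs[simp]: "finite (supp (ugs i j))" by (simp add: ugs_mono)

lemma fs_psum[simp]: "finite S \<Longrightarrow> (\<And>x. finite (supp (f x))) \<Longrightarrow> finite (supp (psum f S))"
  by (rule finite_supp_psum) auto

lemma pmul_ug_ugs: "pmul (ug i k) (ugs j k) = mono [(i, k, False), (j, k, True)]"
  by (simp add: ug_mono ugs_mono mono_mul)
lemma pmul_ugs_ug: "pmul (ugs k i) (ug k j) = mono [(k, i, True), (k, j, False)]"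
  by (simp add: ug_mono ugs_mono mono_mul)
lemma pmul_ug_ug: "pmul (ug a k) (ug b l) = mono [(a, k, False), (b, l, False)]"
  by (simp add: ug_mono mono_mul)

lemma fin_rel_qset: "s \<in> rel_qset ns \<Longrightarrow> finite (supp s)"
  unfolding rel_qset_def by (auto simp: pmul_ug_ugs pmul_ugs_ug pmul_ug_ug)

lemma fin_rel_graph: "s \<in> rel_graph ns A \<Longrightarrow> finite (supp s)"
  unfolding rel_graph_def by auto

lemma fin_qut_rel: "s \<in> qut_rel ns As \<Longrightarrow> finite (supp s)"
  unfolding qut_rel_def using fin_rel_qset fin_rel_graph by blast

lemma pstar_mono1: "pstar flipL (mono [(i, j, False)]) = mono [(i, j, True)]"
  using pstar_ug[of i j] by (simp add: ug_mono ugs_mono)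

lemma simg_id: "simg (\<lambda>p. ug (fst p) (snd p)) = (\<lambda>x. mono [x])"
proof (rule ext)
  fix x :: letter
  obtain i j b where x: "x = (i, j, b)" by (cases x)
  show "simg (\<lambda>p. ug (fst p) (snd p)) x = mono [x]"
    by (cases b) (simp_all add: x simg_def ug_mono ugs_mono pstar_mono1)
qed

context cs begin

lemma simg_q: "simg q (i, j, b) = (if cpy i = cpy j then mono [(red i, red j, b)] else pzero)"
  by (cases b) (auto simp: simg_def q_def pstar_pzero ug_mono ugs_mono pstar_mono1)

lemma timg_q: "timg q ((i, j, b), c) = (if cpy i = cpy j then mono [((red i, red j, b), c)] else pzero)"
  by (simp add: timg_def simg_q cp_mono1 cp_pzero)

abbreviation "SQ \<equiv> qut_rel ns (As ` {1..n})"
abbreviation "IS \<equiv> starideal flipL (lett B) SQ"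


lemma IS_gen: "s \<in> SQ \<Longrightarrow> s \<in> IS" by (rule starideal_gen)

lemma pdiff_self: "pdiff p p = pzero" by (rule ext) (simp add: pw)
lemma pdiff_pzero2: "pdiff pzero pzero = pzero" by (rule ext) (simp add: pw)

lemma delta_red: "cpy i = cpy j \<Longrightarrow> delta (red i) (red j) = delta i j"
  unfolding delta_def by (metis sh_red)

lemma push_u1:
  assumes i: "i \<in> B2" and j: "j \<in> B2"
  shows "subst (simg q) (pdiff (psum (\<lambda>k. pmul (ug i k) (ugs j k)) B2) (pconst (delta i j))) \<in> IS"
proof -
  have e: "subst (simg q) (pdiff (psum (\<lambda>k. pmul (ug i k) (ugs j k)) B2) (pconst (delta i j)))
     = pdiff (psum (\<lambda>k. pmul (simg q (i, k, False)) (simg q (j, k, True))) B2) (pconst (delta i j))"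
    by (simp add: pmul_ug_ugs subst_pdiff subst_psum subst_letter2 subst_pconst)
  show ?thesis
  proof (cases "cpy i = cpy j")
    case True
    have "psum (\<lambda>k. pmul (simg q (i, k, False)) (simg q (j, k, True))) B2
        = psum (\<lambda>x. pmul (ug (red i) x) (ugs (red j) x)) B"
      using i j True by (subst psum_copy[where a = "cpy i"]) (auto simp: cpy_le simg_q ug_mono ugs_mono intro!: psum_cong)
    moreover have "pdiff (psum (\<lambda>x. pmul (ug (red i) x) (ugs (red j) x)) B) (pconst (delta (red i) (red j))) \<in> SQ"
      using i j unfolding qut_rel_def rel_qset_def by (intro UnI1) (blast intro: red_in)
    ultimately show ?thesis using e True IS_gen by (simp add: delta_red)
  next
    case False
    have "pmul (simg q (i, k, False)) (simg q (j, k, True)) = pzero" for k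
      using False by (cases "cpy i = cpy k") (auto simp: simg_q)
    then have "psum (\<lambda>k. pmul (simg q (i, k, False)) (simg q (j, k, True))) B2 = pzero"
      by (simp add: psum_pzero)
    moreover have "delta i j = 0" using False by (auto simp: delta_def)
    ultimately show ?thesis using e by (simp add: pdiff_pzero2 IS_zero pconst_zero)
  qed
qed

lemma push_u2:
  assumes i: "i \<in> B2" and j: "j \<in> B2"
  shows "subst (simg q) (pdiff (psum (\<lambda>k. pmul (ugs k i) (ug k j)) B2) (pconst (delta i j))) \<in> IS"
proof -
  have e: "subst (simg q) (pdiff (psum (\<lambda>k. pmul (ugs k i) (ug k j)) B2) (pconst (delta i j)))
     = pdiff (psum (\<lambda>k. pmul (simg q (k, i, True)) (simg q (k, j, False))) B2) (pconst (delta i j))"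
    by (simp add: pmul_ugs_ug subst_pdiff subst_psum subst_letter2 subst_pconst)
  show ?thesis
  proof (cases "cpy i = cpy j")
    case True
    have "psum (\<lambda>k. pmul (simg q (k, i, True)) (simg q (k, j, False))) B2
        = psum (\<lambda>x. pmul (ugs x (red i)) (ug x (red j))) B"
      using i j True by (subst psum_copy[where a = "cpy i"]) (auto simp: cpy_le simg_q ug_mono ugs_mono intro!: psum_cong)
    moreover have "pdiff (psum (\<lambda>x. pmul (ugs x (red i)) (ug x (red j))) B) (pconst (delta (red i) (red j))) \<in> SQ"
      using i j unfolding qut_rel_def rel_qset_def by (intro UnI1 UnI2) (blast intro: red_in)
    ultimately show ?thesis using e True IS_gen by (simp add: delta_red)
  next
    case False
    have "pmul (simg q (k, i, True)) (simg q (k, j, False)) = pzero" for k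
      using False by (cases "cpy i = cpy k") (auto simp: simg_q)
    then have "psum (\<lambda>k. pmul (simg q (k, i, True)) (simg q (k, j, False))) B2 = pzero"
      by (simp add: psum_pzero)
    moreover have "delta i j = 0" using False by (auto simp: delta_def)
    ultimately show ?thesis using e by (simp add: pdiff_pzero2 IS_zero pconst_zero)
  qed
qed

lemma psmult_pzero: "psmult c pzero = pzero" by (rule ext) (simp add: pw)

lemma push_mult:
  assumes c: "c \<in> B2" and k: "k \<in> B2" and l: "l \<in> B2"
  shows "subst (simg q) (pdiff (psum (\<lambda>a. psum (\<lambda>b. psmult (mc ns2 c a b) (pmul (ug a k) (ug b l))) B2) B2)
         (psum (\<lambda>d. psmult (mc ns2 d k l) (ug c d)) B2)) \<in> IS"
proof -
  have e: "subst (simg q) (pdiff (psum (\<lambda>a. psum (\<lambda>b. psmult (mc ns2 c a b) (pmul (ug a k) (ug b l))) B2) B2)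
         (psum (\<lambda>d. psmult (mc ns2 d k l) (ug c d)) B2))
    = pdiff (psum (\<lambda>a. psum (\<lambda>b. psmult (mc ns2 c a b) (pmul (simg q (a, k, False)) (simg q (b, l, False)))) B2) B2)
         (psum (\<lambda>d. psmult (mc ns2 d k l) (simg q (c, d, False))) B2)"
    by (simp only: pmul_ug_ug) (simp add: ug_mono subst_pdiff subst_psum subst_psmult subst_letter2 subst_letter)
  let ?A = "cpy c"
  show ?thesis
  proof (cases "cpy k = ?A \<and> cpy l = ?A")
    case True
    have cA: "?A \<le> n" using c by (rule cpy_le)
    have inner: "psum (\<lambda>b. psmult (mc ns2 c (sh ?A x) b) (pmul (simg q (sh ?A x, k, False)) (simg q (b, l, False)))) B2
      = psum (\<lambda>y. psmult (mc ns (red c) x y) (pmul (ug x (red k)) (ug y (red l)))) B" if x: "x \<in> B" for x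
      using x True cA c by (subst psum_copy[where a = ?A]) (auto simp: mc2 simg_q ug_mono psmult_zero_pzero intro!: psum_cong)
    have "psum (\<lambda>a. psum (\<lambda>b. psmult (mc ns2 c a b) (pmul (simg q (a, k, False)) (simg q (b, l, False)))) B2) B2
      = psum (\<lambda>x. psum (\<lambda>b. psmult (mc ns2 c (sh ?A x) b) (pmul (simg q (sh ?A x, k, False)) (simg q (b, l, False)))) B2) B"
      using cA c by (subst psum_copy[where a = ?A]) (auto simp: mc2 psmult_zero_pzero psum_pzero)
    also have "\<dots> = psum (\<lambda>x. psum (\<lambda>y. psmult (mc ns (red c) x y) (pmul (ug x (red k)) (ug y (red l)))) B) B"
      by (intro psum_cong inner)
    finally have f1: "psum (\<lambda>a. psum (\<lambda>b. psmult (mc ns2 c a b) (pmul (simg q (a, k, False)) (simg q (b, l, False)))) B2) B2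
      = psum (\<lambda>x. psum (\<lambda>y. psmult (mc ns (red c) x y) (pmul (ug x (red k)) (ug y (red l)))) B) B" .
    have f2: "psum (\<lambda>d. psmult (mc ns2 d k l) (simg q (c, d, False))) B2
      = psum (\<lambda>x. psmult (mc ns x (red k) (red l)) (ug (red c) x)) B"
      using cA c True by (subst psum_copy[where a = ?A]) (auto simp: mc2 simg_q ug_mono sh_in psmult_zero_pzero intro!: psum_cong)
    have "pdiff (psum (\<lambda>x. psum (\<lambda>y. psmult (mc ns (red c) x y) (pmul (ug x (red k)) (ug y (red l)))) B) B)
       (psum (\<lambda>x. psmult (mc ns x (red k) (red l)) (ug (red c) x)) B) \<in> SQ"
      using c k l unfolding qut_rel_def rel_qset_def by (intro UnI1 UnI2) (blast intro: red_in)
    then show ?thesis using e f1 f2 IS_gen by simp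
  next
    case False
    have z1: "psmult (mc ns2 c a b) (pmul (simg q (a, k, False)) (simg q (b, l, False))) = pzero" if "a \<in> B2" for a b
    proof (cases "cpy a = ?A \<and> cpy b = ?A")
      case True
      then have "simg q (a, k, False) = pzero \<or> simg q (b, l, False) = pzero" using False by (auto simp: simg_q)
      then show ?thesis by (auto simp: psmult_pzero)
    next
      case F2: False
      then show ?thesis using c by (auto simp: mc2 psmult_zero_pzero)
    qed
    have z2: "psmult (mc ns2 d k l) (simg q (c, d, False)) = pzero" if d: "d \<in> B2" for d
    proof (cases "cpy k = cpy d \<and> cpy l = cpy d")
      case True
      then have "simg q (c, d, False) = pzero" using False by (auto simp: simg_q)
      then show ?thesis by (simp add: psmult_pzero)
    next
      case F2: False
      then show ?thesis using d by (auto simp: mc2 psmult_zero_pzero)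
    qed
    have "psum (\<lambda>a. psum (\<lambda>b. psmult (mc ns2 c a b) (pmul (simg q (a, k, False)) (simg q (b, l, False)))) B2) B2 = pzero"
      using z1 by (simp add: psum_pzero cong: psum_cong)
    moreover have "psum (\<lambda>d. psmult (mc ns2 d k l) (simg q (c, d, False))) B2 = pzero"
      using z2 by (simp add: psum_pzero cong: psum_cong)
    ultimately show ?thesis using e by (simp add: pdiff_pzero2 IS_zero)
  qed
qed

lemma push_unit:
  assumes i: "i \<in> B2"
  shows "subst (simg q) (pdiff (psum (\<lambda>j. psmult (eta ns2 j) (ug i j)) B2) (pconst (eta ns2 i))) \<in> IS"
proof -
  have e: "subst (simg q) (pdiff (psum (\<lambda>j. psmult (eta ns2 j) (ug i j)) B2) (pconst (eta ns2 i)))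
     = pdiff (psum (\<lambda>j. psmult (eta ns2 j) (simg q (i, j, False))) B2) (pconst (eta ns2 i))"
    by (simp add: ug_mono subst_pdiff subst_psum subst_psmult subst_letter subst_pconst)
  have cA: "cpy i \<le> n" using i by (rule cpy_le)
  have f: "psum (\<lambda>j. psmult (eta ns2 j) (simg q (i, j, False))) B2 = psum (\<lambda>x. psmult (eta ns x) (ug (red i) x)) B"
    using cA i by (subst psum_copy[where a = "cpy i"]) (auto simp: simg_q ug_mono eta_sh psmult_pzero intro!: psum_cong)
  have "pdiff (psum (\<lambda>x. psmult (eta ns x) (ug (red i) x)) B) (pconst (eta ns (red i))) \<in> SQ"
    using i unfolding qut_rel_def rel_qset_def by (intro UnI1 UnI2) (blast intro: red_in)
  then show ?thesis using e f IS_gen i by (simp add: eta2)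
qed

lemma push_graph:
  assumes i: "i \<in> B2" and j: "j \<in> B2"
  shows "subst (simg q) (pdiff (psum (\<lambda>k. psmult (Ap k j) (ug i k)) B2) (psum (\<lambda>k. psmult (Ap i k) (ug k j)) B2)) \<in> IS"
proof -
  let ?a = "cpy i" and ?b = "cpy j"
  have e: "subst (simg q) (pdiff (psum (\<lambda>k. psmult (Ap k j) (ug i k)) B2) (psum (\<lambda>k. psmult (Ap i k) (ug k j)) B2))
     = pdiff (psum (\<lambda>k. psmult (Ap k j) (simg q (i, k, False))) B2) (psum (\<lambda>k. psmult (Ap i k) (simg q (k, j, False))) B2)"
    by (simp add: ug_mono subst_pdiff subst_psum subst_psmult subst_letter)
  have an: "?a \<le> n" and bn: "?b \<le> n" using i j by (auto simp: cpy_le)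
  have f1: "psum (\<lambda>k. psmult (Ap k j) (simg q (i, k, False))) B2 = psum (\<lambda>x. psmult (Blk ?a ?b x (red j)) (ug (red i) x)) B"
    using an i by (subst psum_copy[where a = ?a]) (auto simp: simg_q ug_mono Ap_def psmult_pzero intro!: psum_cong)
  have f2: "psum (\<lambda>k. psmult (Ap i k) (simg q (k, j, False))) B2 = psum (\<lambda>x. psmult (Blk ?a ?b (red i) x) (ug x (red j))) B"
    using bn j by (subst psum_copy[where a = ?b]) (auto simp: simg_q ug_mono Ap_def psmult_pzero intro!: psum_cong)
  have ri: "red i \<in> B" and rj: "red j \<in> B" using i j by (auto simp: red_in)
  show ?thesis
  proof (cases "?a = ?b \<and> 1 \<le> ?a")
    case True
    then have blk: "Blk ?a ?b = As ?a" by (auto simp: Blk_def intro!: ext)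
    have "?a \<in> {1..n}" using True an by auto
    then have "pdiff (psum (\<lambda>x. psmult (As ?a x (red j)) (ug (red i) x)) B) (psum (\<lambda>x. psmult (As ?a (red i) x) (ug x (red j))) B) \<in> SQ"
      using ri rj unfolding qut_rel_def rel_graph_def by (intro UnI2) blast
    then show ?thesis using e f1 f2 blk IS_gen by simp
  next
    case F: False
    show ?thesis
    proof (cases "?a = Suc ?b")
      case True
      then have blk: "Blk ?a ?b = idm" using F by (auto simp: Blk_def intro!: ext)
      show ?thesis using e f1 f2 ri rj by (simp add: blk psum_idm1 psum_idm2 pdiff_self IS_zero)
    next
      case False
      then have blk: "Blk ?a ?b = (\<lambda>x y. 0)" using F by (auto simp: Blk_def intro!: ext)
      show ?thesis using e f1 f2 by (simp add: blk psmult_zero_pzero psum_pzero pdiff_pzero2 IS_zero)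
    qed
  qed
qed

lemma push_R2:
  assumes r: "r \<in> R2"
  shows "subst (simg q) r \<in> IS"
proof -
  from r have "r \<in> rel_qset ns2 \<or> r \<in> rel_graph ns2 Ap" by (simp add: R2_def qut_rel_def)
  then show ?thesis
  proof
    assume "r \<in> rel_qset ns2"
    then consider
        (u1) i j where "i \<in> B2" "j \<in> B2" "r = pdiff (psum (\<lambda>k. pmul (ug i k) (ugs j k)) B2) (pconst (delta i j))"
      | (u2) i j where "i \<in> B2" "j \<in> B2" "r = pdiff (psum (\<lambda>k. pmul (ugs k i) (ug k j)) B2) (pconst (delta i j))"
      | (m) c k l where "c \<in> B2" "k \<in> B2" "l \<in> B2" "r = pdiff (psum (\<lambda>a. psum (\<lambda>b. psmult (mc ns2 c a b) (pmul (ug a k) (ug b l))) B2) B2)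
            (psum (\<lambda>d. psmult (mc ns2 d k l) (ug c d)) B2)"
      | (e) i where "i \<in> B2" "r = pdiff (psum (\<lambda>j. psmult (eta ns2 j) (ug i j)) B2) (pconst (eta ns2 i))"
      unfolding rel_qset_def Un_iff mem_Collect_eq by (elim disjE exE conjE) (assumption | rule that; assumption)+
    then show ?thesis
    proof cases
      case u1 then show ?thesis using push_u1[of i j] by simp
    next
      case u2 then show ?thesis using push_u2[of i j] by simp
    next
      case m then show ?thesis using push_mult[of c k l] by simp
    next
      case e then show ?thesis using push_unit[of i] by simp
    qed
  next
    assume "r \<in> rel_graph ns2 Ap"
    then show ?thesis unfolding rel_graph_def mem_Collect_eq
      using push_graph by blast
  qed
qed

end


context cs begin

lemma comult_mono: "comult S i j = psum (\<lambda>k. mono [((i, k, False), False), ((k, j, False), True)]) S"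
  by (simp add: comult_def ug_mono cp_mono1 mono_mul)

lemma comult_eq:
  assumes i: "i \<in> B2" and j: "j \<in> B2"
  shows "subst (timg q) (comult B2 i j) = subst (dimg B) (q (i, j))"
proof -
  have l: "subst (timg q) (comult B2 i j) = psum (\<lambda>k. pmul (timg q ((i, k, False), False)) (timg q ((k, j, False), True))) B2"
    by (simp add: comult_mono subst_psum subst_letter2)
  show ?thesis
  proof (cases "cpy i = cpy j")
    case True
    have an: "cpy i \<le> n" using i by (rule cpy_le)
    have "psum (\<lambda>k. pmul (timg q ((i, k, False), False)) (timg q ((k, j, False), True))) B2
        = psum (\<lambda>x. mono [((red i, x, False), False), ((x, red j, False), True)]) B"
      using an True by (subst psum_copy[where a = "cpy i"]) (auto simp: timg_q mono_mul intro!: psum_cong)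
    moreover have "subst (dimg B) (q (i, j)) = psum (\<lambda>x. mono [((red i, x, False), False), ((x, red j, False), True)]) B"
      using True by (simp add: q_def ug_mono subst_letter dimg_def comult_mono)
    ultimately show ?thesis using l by simp
  next
    case False
    have "pmul (timg q ((i, k, False), False)) (timg q ((k, j, False), True)) = pzero" for k
      using False by (cases "cpy i = cpy k") (auto simp: timg_q)
    then have "psum (\<lambda>k. pmul (timg q ((i, k, False), False)) (timg q ((k, j, False), True))) B2 = pzero"
      by (simp add: psum_pzero)
    moreover have "subst (dimg B) (q (i, j)) = pzero" using False by (simp add: q_def subst_pzero)
    ultimately show ?thesis using l by simp
  qed
qed

lemma main_iso: "qgiso (qbasis ns2) (qut_rel ns2 {Ap}) (qbasis ns) (qut_rel ns (As ` {1..n}))"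
proof -
  let ?q' = "\<lambda>p::idx \<times> idx. ug (fst p) (snd p)"
  have h1: "\<forall>i\<in>B2. \<forall>j\<in>B2. q (i, j) \<in> ncpoly (lett B)"
    by (simp add: q_def ug_ncpoly red_in ncpoly_pzero)
  have h2: "\<forall>i\<in>B. \<forall>j\<in>B. ?q' (i, j) \<in> ncpoly (lett B2)"
    by (simp add: ug_ncpoly B_sub)
  have h3: "\<forall>r\<in>qut_rel ns2 {Ap}. subst (simg q) r \<in> starideal flipL (lett B) (qut_rel ns (As ` {1..n}))"
    using push_R2 by (simp add: R2_def)
  have h4: "\<forall>s\<in>qut_rel ns (As ` {1..n}). subst (simg ?q') s \<in> starideal flipL (lett B2) (qut_rel ns2 {Ap})"
  proof
    fix s assume s: "s \<in> qut_rel ns (As ` {1..n})"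
    have "subst (simg ?q') s = s" using fin_qut_rel[OF s] by (simp add: simg_id subst_id)
    then show "subst (simg ?q') s \<in> starideal flipL (lett B2) (qut_rel ns2 {Ap})"
      using S_in_G[OF s] G_star by (simp add: R2_def)
  qed
  have h5: "\<forall>i\<in>B2. \<forall>j\<in>B2. pdiff (subst (simg ?q') (q (i, j))) (ug i j) \<in> starideal flipL (lett B2) (qut_rel ns2 {Ap})"
  proof (intro ballI)
    fix i j assume i: "i \<in> B2" and j: "j \<in> B2"
    have "finite (supp (q (i, j)))" by (simp add: q_def)
    then have "subst (simg ?q') (q (i, j)) = q (i, j)" by (simp add: simg_id subst_id)
    then show "pdiff (subst (simg ?q') (q (i, j))) (ug i j) \<in> starideal flipL (lett B2) (qut_rel ns2 {Ap})"
      using q_back[OF i j] G_star by (simp add: R2_def)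
  qed
  have h6: "\<forall>i\<in>B. \<forall>j\<in>B. pdiff (subst (simg q) (?q' (i, j))) (ug i j) \<in> starideal flipL (lett B) (qut_rel ns (As ` {1..n}))"
  proof (intro ballI)
    fix i j assume i: "i \<in> B" and j: "j \<in> B"
    have "subst (simg q) (?q' (i, j)) = ug i j"
      using i j by (simp add: ug_mono subst_letter simg_q cpy_B red_B)
    then show "pdiff (subst (simg q) (?q' (i, j))) (ug i j) \<in> starideal flipL (lett B) (qut_rel ns (As ` {1..n}))"
      by (simp add: pdiff_self IS_zero)
  qed
  have h7: "\<forall>i\<in>B2. \<forall>j\<in>B2. pdiff (subst (timg q) (comult B2 i j)) (subst (dimg B) (q (i, j))) \<in> tideal B (qut_rel ns (As ` {1..n}))"
    using comult_eq by (simp add: pdiff_self tideal_def IS_zero)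
  show ?thesis unfolding qgiso_def
    by (intro exI[of _ q] exI[of _ ?q'] conjI) (rule h1 h2 h3 h4 h5 h6 h7)+
qed

end

theorem theorem5p2:
  fixes ns :: "nat list" and n :: nat and As :: "nat \<Rightarrow> lmap"
  assumes "qset ns"
    and "\<forall>i\<in>{1..n}. qgraph ns (As i) \<and> noloops ns (As i) \<and> regular ns (As i)"
  shows "\<exists>ns' A'. qset ns' \<and> qgraph ns' A' \<and>
           qgiso (qbasis ns') (qut_rel ns' {A'}) (qbasis ns) (qut_rel ns (As ` {1..n}))"
proof -
  define dg where "dg a = (SOME d. dregular ns (As a) d)" for a
  have "dregular ns (As a) (dg a)" if "a \<in> {1..n}" for a
    using assms(2) that unfolding dg_def regular_def by (metis someI_ex)
  then interpret cs ns n As dg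
    using assms by unfold_locales auto
  show ?thesis using qset2 qgraph2 main_iso by blast
qed


end
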